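(* In the setting of the context, $q_B=\tilde q=q|_B$ and $q_A=q|_A$, and $E_{M_1}(q(c))=q_A(E_{M_1}(c))$ for all $c\in C$.
   Context: $k$ is a field; $C_R(S)=\{r\in R:rs=sr\ \forall s\in S\}$. $N\subseteq M$ is a strongly separable, irreducible extension of $k$-algebras: $C_M(N)=k1$ and there are an $N$-bimodule map $E:M\to N$ and $x_1,\dots,x_n,y_1,\dots,y_n\in M$ with $\sum_iE(mx_i)y_i=m=\sum_ix_iE(y_im)$ for all $m\in M$, $E(1)\neq0$, $\sum_ix_iy_i\neq0$; normalized so that $E(1)=1$, whence $\sum_ix_iy_i=\lambda^{-1}1$ with $0\neq\lambda\in k$. Basic construction: given $S\subseteq R$, an $S$-bimodule map $E_S:R\to S$ with $E_S(1)=1$ and $r_i,s_i\in R$ with $\sum_iE_S(rr_i)s_i=r=\sum_ir_iE_S(s_ir)$ and $\sum_ir_is_i=\lambda^{-1}1$, set $R_1=R\otimes_SR$ with product $(a\otimes b)(c\otimes d)=aE_S(bc)\otimes d$, unit $\sum_ir_i\otimes s_i$, $R\subseteq R_1$ via $r\mapsto\sum_irr_i\otimes s_i$, $E_R:R_1\to R$, $a\otimes b\mapsto\lambda ab$; then $E_R$, $\lambda^{-1}r_i\otimes1$, $1\otimes s_i$ satisfy the same conditions with the same $\lambda$. From $(N\subseteq M,E)$ get $M_1,E_M$; from $(M\subseteq M_1,E_M)$ get $M_2,E_{M_1}$. Let $A=C_{M_1}(N)$, $B=C_{M_2}(M)$, $C=C_{M_2}(N)$. Depth 2 is assumed: $M_1$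 is free as right $M$-module with basis in $A$, $M_2$ free as right $M_1$-module with basis in $B$. Let $F=E_M\circ E_{M_1}$; on $C$ it takes values in $C_M(N)=k1\cong k$ and is a faithful linear functional on $C$; $E_M|_A$ is a faithful functional on $A$ and $E_{M_1}|_B$ a faithful functional on $B$ (values in $k1$). Nakayama automorphisms: $q:C\to C$ is defined by $F(q(c)c')=F(c'c)$ for all $c,c'\in C$; $q_A:A\to A$ by $E_M(q_A(a)a')=E_M(a'a)$ for all $a,a'\in A$; $q_B:B\to B$ by $E_{M_1}(q_B(b)b')=E_{M_1}(b'b)$ for all $b,b'\in B$; and $\tilde q:B\to B$ by $\hat F(\tilde q(b)x)=\hat F(xb)$ for all $b\in B$, $x\in M_2$, where $\hat F=E_M\circ E_{M_1}:M_2\to M$. Note $E_{M_1}(C)\subseteq A$. *)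

theory Defs
  imports "HOL-Library.Poly_Mapping" "HOL-Library.FuncSet"
begin

record ('k, 'a) kalg =
  carr :: "'a set"
  add  :: "'a \<Rightarrow> 'a \<Rightarrow> 'a"
  mul  :: "'a \<Rightarrow> 'a \<Rightarrow> 'a"
  zero :: "'a"
  one  :: "'a"
  smul :: "'k \<Rightarrow> 'a \<Rightarrow> 'a"

definition kalgebra :: "('k::field, 'a) kalg \<Rightarrow> bool" where
  "kalgebra A \<longleftrightarrow>
     zero A \<in> carr A \<and> one A \<in> carr A \<and>
     (\<forall>x\<in>carr A. \<forall>y\<in>carr A. add A x y \<in> carr A \<and> mul A x y \<in> carr A) \<and>
     (\<forall>c. \<forall>x\<in>carr A. smul A c x \<in> carr A) \<and>
     (\<forall>x\<in>carr A. \<forall>y\<in>carr A. \<forall>z\<in>carr A.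
        add A (add A x y) z = add A x (add A y z) \<and>
        mul A (mul A x y) z = mul A x (mul A y z) \<and>
        mul A x (add A y z) = add A (mul A x y) (mul A x z) \<and>
        mul A (add A x y) z = add A (mul A x z) (mul A y z)) \<and>
     (\<forall>x\<in>carr A. \<forall>y\<in>carr A. add A x y = add A y x) \<and>
     (\<forall>x\<in>carr A. add A x (zero A) = x \<and> add A x (smul A (-1) x) = zero A \<and>
        mul A (one A) x = x \<and> mul A x (one A) = x \<and> smul A 1 x = x) \<and>
     (\<forall>a b. \<forall>x\<in>carr A. smul A (a * b) x = smul A a (smul A b x) \<and>
        smul A (a + b) x = add A (smul A a x) (smul A b x)) \<and>
     (\<forall>a. \<forall>x\<in>carr A. \<forall>y\<in>carr A. smul A a (add A x y) = add A (smul A a x) (smul A a y) \<and>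
        smul A a (mul A x y) = mul A (smul A a x) y \<and>
        smul A a (mul A x y) = mul A x (smul A a y))"

definition subalgebra :: "('k::field, 'a) kalg \<Rightarrow> 'a set \<Rightarrow> bool" where
  "subalgebra A S \<longleftrightarrow> S \<subseteq> carr A \<and> one A \<in> S \<and> zero A \<in> S \<and>
     (\<forall>x\<in>S. \<forall>y\<in>S. add A x y \<in> S \<and> mul A x y \<in> S) \<and> (\<forall>c. \<forall>x\<in>S. smul A c x \<in> S)"

definition cent :: "('k, 'a) kalg \<Rightarrow> 'a set \<Rightarrow> 'a set" where
  "cent A S = {r \<in> carr A. \<forall>s\<in>S. mul A r s = mul A s r}"

definition scalars :: "('k, 'a) kalg \<Rightarrow> 'a set" where
  "scalars A = {smul A c (one A) | c. True}"

definition fsum :: "('k, 'a) kalg \<Rightarrow> ('b \<Rightarrow> 'a) \<Rightarrow> 'b set \<Rightarrow> 'a" where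
  "fsum A f I = Finite_Set.fold (\<lambda>i acc. add A (f i) acc) (zero A) I"

definition bimodule_map :: "('k, 'a) kalg \<Rightarrow> 'a set \<Rightarrow> ('a \<Rightarrow> 'a) \<Rightarrow> bool" where
  "bimodule_map A S E \<longleftrightarrow>
     (\<forall>m\<in>carr A. E m \<in> S) \<and>
     (\<forall>m\<in>carr A. \<forall>m'\<in>carr A. E (add A m m') = add A (E m) (E m')) \<and>
     (\<forall>s\<in>S. \<forall>m\<in>carr A. E (mul A s m) = mul A s (E m) \<and> E (mul A m s) = mul A (E m) s)"

type_synonym ('k, 'a) free2 = "('a \<times> 'a) \<Rightarrow>\<^sub>0 'k"

definition tscale :: "'k::field \<Rightarrow> ('k, 'a) free2 \<Rightarrow> ('k, 'a) free2" where
  "tscale c v = Poly_Mapping.map ((*) c) v"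

definition tgen :: "'a \<Rightarrow> 'a \<Rightarrow> ('k::field, 'a) free2" where
  "tgen a b = Poly_Mapping.single (a, b) 1"

definition tfree :: "('k::field, 'a) kalg \<Rightarrow> ('k, 'a) free2 set" where
  "tfree R = {v. Poly_Mapping.keys v \<subseteq> carr R \<times> carr R}"

text \<open>The k-subspace of relations defining R \<otimes>_S R.\<close>
inductive_set trel :: "('k::field, 'a) kalg \<Rightarrow> 'a set \<Rightarrow> ('k, 'a) free2 set"
  for R S where
  trel_zero: "0 \<in> trel R S"
| trel_add: "v \<in> trel R S \<Longrightarrow> w \<in> trel R S \<Longrightarrow> v + w \<in> trel R S"
| trel_scale: "v \<in> trel R S \<Longrightarrow> tscale c v \<in> trel R S"
| trel_addl: "a \<in> carr R \<Longrightarrow> a' \<in> carr R \<Longrightarrow> b \<in> carr R \<Longrightarrow>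
     tgen (add R a a') b - tgen a b - tgen a' b \<in> trel R S"
| trel_addr: "a \<in> carr R \<Longrightarrow> b \<in> carr R \<Longrightarrow> b' \<in> carr R \<Longrightarrow>
     tgen a (add R b b') - tgen a b - tgen a b' \<in> trel R S"
| trel_smull: "a \<in> carr R \<Longrightarrow> b \<in> carr R \<Longrightarrow>
     tgen (smul R c a) b - tscale c (tgen a b) \<in> trel R S"
| trel_smulr: "a \<in> carr R \<Longrightarrow> b \<in> carr R \<Longrightarrow>
     tgen a (smul R c b) - tscale c (tgen a b) \<in> trel R S"
| trel_bal: "a \<in> carr R \<Longrightarrow> b \<in> carr R \<Longrightarrow> s \<in> S \<Longrightarrow>
     tgen (mul R a s) b - tgen a (mul R s b) \<in> trel R S"

definition tclass :: "('k::field, 'a) kalg \<Rightarrow> 'a set \<Rightarrow> ('k, 'a) free2 \<Rightarrow> ('k, 'a) free2 set" where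
  "tclass R S v = {v + r | r. r \<in> trel R S}"

definition trep :: "('k, 'a) free2 set \<Rightarrow> ('k, 'a) free2" where
  "trep X = (SOME v. v \<in> X)"

definition tmul_raw :: "('k::field, 'a) kalg \<Rightarrow> ('a \<Rightarrow> 'a) \<Rightarrow> ('k, 'a) free2 \<Rightarrow> ('k, 'a) free2 \<Rightarrow> ('k, 'a) free2" where
  "tmul_raw R E v w =
     (\<Sum>p\<in>Poly_Mapping.keys v. \<Sum>p'\<in>Poly_Mapping.keys w.
        tscale (Poly_Mapping.lookup v p * Poly_Mapping.lookup w p')
          (tgen (mul R (fst p) (E (mul R (snd p) (fst p')))) (snd p')))"

definition bc_alg :: "('k::field, 'a) kalg \<Rightarrow> 'a set \<Rightarrow> ('a \<Rightarrow> 'a) \<Rightarrow> nat \<Rightarrow>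
    (nat \<Rightarrow> 'a) \<Rightarrow> (nat \<Rightarrow> 'a) \<Rightarrow> ('k, ('k, 'a) free2 set) kalg" where
  "bc_alg R S E n r s =
     \<lparr> carr = tclass R S ` tfree R,
       add = (\<lambda>X Y. tclass R S (trep X + trep Y)),
       mul = (\<lambda>X Y. tclass R S (tmul_raw R E (trep X) (trep Y))),
       zero = tclass R S 0,
       one = tclass R S (\<Sum>i<n. tgen (r i) (s i)),
       smul = (\<lambda>c X. tclass R S (tscale c (trep X))) \<rparr>"

definition bc_emb :: "('k::field, 'a) kalg \<Rightarrow> 'a set \<Rightarrow> nat \<Rightarrow>
    (nat \<Rightarrow> 'a) \<Rightarrow> (nat \<Rightarrow> 'a) \<Rightarrow> 'a \<Rightarrow> ('k, 'a) free2 set" where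
  "bc_emb R S n r s x = tclass R S (\<Sum>i<n. tgen (mul R x (r i)) (s i))"

definition bc_E :: "('k::field, 'a) kalg \<Rightarrow> 'k \<Rightarrow> ('k, 'a) free2 set \<Rightarrow> 'a" where
  "bc_E R lam X = smul R lam
      (fsum R (\<lambda>p. smul R (Poly_Mapping.lookup (trep X) p) (mul R (fst p) (snd p)))
              (Poly_Mapping.keys (trep X)))"

text \<open>New dual bases in R_1: lambda^{-1} r_i \<otimes> 1 and 1 \<otimes> s_i.\<close>
definition bc_r :: "('k::field, 'a) kalg \<Rightarrow> 'a set \<Rightarrow> 'k \<Rightarrow> (nat \<Rightarrow> 'a) \<Rightarrow> nat \<Rightarrow> ('k, 'a) free2 set" where
  "bc_r R S lam r i = tclass R S (tscale (inverse lam) (tgen (r i) (one R)))"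

definition bc_s :: "('k::field, 'a) kalg \<Rightarrow> 'a set \<Rightarrow> (nat \<Rightarrow> 'a) \<Rightarrow> nat \<Rightarrow> ('k, 'a) free2 set" where
  "bc_s R S s i = tclass R S (tgen (one R) (s i))"

definition ss_irreducible ::
  "('k::field, 'a) kalg \<Rightarrow> 'a set \<Rightarrow> ('a \<Rightarrow> 'a) \<Rightarrow> nat \<Rightarrow> (nat \<Rightarrow> 'a) \<Rightarrow> (nat \<Rightarrow> 'a) \<Rightarrow> 'k \<Rightarrow> bool" where
  "ss_irreducible M N E n x y lam \<longleftrightarrow>
     kalgebra M \<and> subalgebra M N \<and> one M \<noteq> zero M \<and>
     cent M N = scalars M \<and>
     bimodule_map M N E \<and> E (one M) = one M \<and>
     (\<forall>i<n. x i \<in> carr M \<and> y i \<in> carr M) \<and>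
     (\<forall>m\<in>carr M. fsum M (\<lambda>i. mul M (E (mul M m (x i))) (y i)) {..<n} = m) \<and>
     (\<forall>m\<in>carr M. fsum M (\<lambda>i. mul M (x i) (E (mul M (y i) m))) {..<n} = m) \<and>
     lam \<noteq> 0 \<and>
     fsum M (\<lambda>i. mul M (x i) (y i)) {..<n} = smul M (inverse lam) (one M)"

definition free_right_basis_in ::
  "('k, 'b) kalg \<Rightarrow> ('k, 'a) kalg \<Rightarrow> ('a \<Rightarrow> 'b) \<Rightarrow> 'b set \<Rightarrow> bool" where
  "free_right_basis_in Z R emb P \<longleftrightarrow>
     (\<exists>(m::nat) a. (\<forall>j<m. a j \<in> P) \<and>
        (\<forall>z\<in>carr Z. \<exists>!c. c \<in> {..<m} \<rightarrow>\<^sub>E carr R \<and>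
            z = fsum Z (\<lambda>j. mul Z (a j) (emb (c j))) {..<m}))"

definition faithful_on :: "('k, 'b) kalg \<Rightarrow> 'b set \<Rightarrow> ('k, 'c) kalg \<Rightarrow> ('b \<Rightarrow> 'c) \<Rightarrow> bool" where
  "faithful_on Z D W phi \<longleftrightarrow>
     (\<forall>d\<in>D. (\<forall>d'\<in>D. phi (mul Z d d') = zero W) \<longrightarrow> d = zero Z) \<and>
     (\<forall>d\<in>D. (\<forall>d'\<in>D. phi (mul Z d' d) = zero W) \<longrightarrow> d = zero Z)"


definition M1_of where "M1_of M N E n x y = bc_alg M N E n x y"
definition i1_of where "i1_of M N n x y = bc_emb M N n x y"
definition EM_of where "EM_of M lam = bc_E M lam"
definition M2_of where
  "M2_of M N E n x y lam =
     bc_alg (M1_of M N E n x y) (i1_of M N n x y ` carr M) (i1_of M N n x y \<circ> EM_of M lam)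
            n (bc_r M N lam x) (bc_s M N y)"
definition i2_of where
  "i2_of M N E n x y lam =
     bc_emb (M1_of M N E n x y) (i1_of M N n x y ` carr M) n (bc_r M N lam x) (bc_s M N y)"
definition EM1_of where "EM1_of M N E n x y lam = bc_E (M1_of M N E n x y) lam"

end

theory Submission
  imports Defs
begin

locale ka =
  fixes A :: "('k::field, 'a) kalg"
  assumes ka: "kalgebra A"
begin

lemma closed[simp, intro]:
  "zero A \<in> carr A" "one A \<in> carr A"
  "x \<in> carr A \<Longrightarrow> y \<in> carr A \<Longrightarrow> add A x y \<in> carr A"
  "x \<in> carr A \<Longrightarrow> y \<in> carr A \<Longrightarrow> mul A x y \<in> carr A"
  "x \<in> carr A \<Longrightarrow> smul A c x \<in> carr A"
  using ka unfolding kalgebra_def by auto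

lemma K_assoc: "\<forall>x\<in>carr A. \<forall>y\<in>carr A. \<forall>z\<in>carr A.
        add A (add A x y) z = add A x (add A y z) \<and>
        mul A (mul A x y) z = mul A x (mul A y z) \<and>
        mul A x (add A y z) = add A (mul A x y) (mul A x z) \<and>
        mul A (add A x y) z = add A (mul A x z) (mul A y z)"
  using ka unfolding kalgebra_def apply - apply (elim conjE) by assumption
lemma K_comm: "\<forall>x\<in>carr A. \<forall>y\<in>carr A. add A x y = add A y x"
  using ka unfolding kalgebra_def apply - apply (elim conjE) by assumption
lemma K_unit: "\<forall>x\<in>carr A. add A x (zero A) = x \<and> add A x (smul A (-1) x) = zero A \<and>
        mul A (one A) x = x \<and> mul A x (one A) = x \<and> smul A 1 x = x"
  using ka unfolding kalgebra_def apply - apply (elim conjE) by assumption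
lemma K_sc: "\<forall>a b. \<forall>x\<in>carr A. smul A (a * b) x = smul A a (smul A b x) \<and>
        smul A (a + b) x = add A (smul A a x) (smul A b x)"
  using ka unfolding kalgebra_def apply - apply (elim conjE) by assumption
lemma K_sm: "\<forall>a. \<forall>x\<in>carr A. \<forall>y\<in>carr A. smul A a (add A x y) = add A (smul A a x) (smul A a y) \<and>
        smul A a (mul A x y) = mul A (smul A a x) y \<and>
        smul A a (mul A x y) = mul A x (smul A a y)"
  using ka unfolding kalgebra_def apply - apply (elim conjE) by assumption

lemma add_assoc: "x \<in> carr A \<Longrightarrow> y \<in> carr A \<Longrightarrow> z \<in> carr A \<Longrightarrow> add A (add A x y) z = add A x (add A y z)"
  using K_assoc by blast
lemma mul_assoc: "x \<in> carr A \<Longrightarrow> y \<in> carr A \<Longrightarrow> z \<in> carr A \<Longrightarrow> mul A (mul A x y) z = mul A x (mul A y z)"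
  using K_assoc by blast
lemma distl: "x \<in> carr A \<Longrightarrow> y \<in> carr A \<Longrightarrow> z \<in> carr A \<Longrightarrow> mul A x (add A y z) = add A (mul A x y) (mul A x z)"
  using K_assoc by blast
lemma distr: "x \<in> carr A \<Longrightarrow> y \<in> carr A \<Longrightarrow> z \<in> carr A \<Longrightarrow> mul A (add A x y) z = add A (mul A x z) (mul A y z)"
  using K_assoc by blast
lemma add_comm: "x \<in> carr A \<Longrightarrow> y \<in> carr A \<Longrightarrow> add A x y = add A y x"
  using K_comm by blast
lemma add_zero: "x \<in> carr A \<Longrightarrow> add A x (zero A) = x"
  using K_unit by blast
lemma add_neg: "x \<in> carr A \<Longrightarrow> add A x (smul A (-1) x) = zero A"
  using K_unit by blast
lemma one_mul: "x \<in> carr A \<Longrightarrow> mul A (one A) x = x"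
  using K_unit by blast
lemma mul_one: "x \<in> carr A \<Longrightarrow> mul A x (one A) = x"
  using K_unit by blast
lemma smul_one: "x \<in> carr A \<Longrightarrow> smul A 1 x = x"
  using K_unit by blast
lemma smul_smul_raw: "x \<in> carr A \<Longrightarrow> smul A (a * b) x = smul A a (smul A b x)"
  using K_sc by blast
lemma smul_smul: "x \<in> carr A \<Longrightarrow> smul A a (smul A b x) = smul A (a * b) x"
  using smul_smul_raw by simp
lemma smul_add_scalar: "x \<in> carr A \<Longrightarrow> smul A (a + b) x = add A (smul A a x) (smul A b x)"
  using K_sc by blast
lemma smul_add: "x \<in> carr A \<Longrightarrow> y \<in> carr A \<Longrightarrow> smul A a (add A x y) = add A (smul A a x) (smul A a y)"
  using K_sm by blast
lemma smul_mul_left_raw: "x \<in> carr A \<Longrightarrow> y \<in> carr A \<Longrightarrow> smul A a (mul A x y) = mul A (smul A a x) y"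
  using K_sm by blast
lemma smul_mul_left: "x \<in> carr A \<Longrightarrow> y \<in> carr A \<Longrightarrow> mul A (smul A a x) y = smul A a (mul A x y)"
  using smul_mul_left_raw by simp
lemma smul_mul_right_raw: "x \<in> carr A \<Longrightarrow> y \<in> carr A \<Longrightarrow> smul A a (mul A x y) = mul A x (smul A a y)"
  using K_sm by blast
lemma smul_mul_right: "x \<in> carr A \<Longrightarrow> y \<in> carr A \<Longrightarrow> mul A x (smul A a y) = smul A a (mul A x y)"
  using smul_mul_right_raw by simp

lemmas [simp] = add_zero one_mul mul_one smul_one smul_smul smul_mul_left smul_mul_right

lemma zero_add[simp]: "x \<in> carr A \<Longrightarrow> add A (zero A) x = x"
  using add_comm[of "zero A" x] add_zero by simp

lemma add_left_comm: "x \<in> carr A \<Longrightarrow> y \<in> carr A \<Longrightarrow> z \<in> carr A \<Longrightarrow> add A x (add A y z) = add A y (add A x z)"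
  using add_assoc[of x y z] add_assoc[of y x z] add_comm[of x y] by simp

lemma add_cancel_left:
  assumes "x \<in> carr A" "y \<in> carr A" "z \<in> carr A" "add A x y = add A x z" shows "y = z"
proof -
  have n: "add A (smul A (-1) x) x = zero A" using add_neg[of x] add_comm[of "smul A (-1) x" x] assms by simp
  have "y = add A (add A (smul A (-1) x) x) y" using n assms by simp
  also have "\<dots> = add A (smul A (-1) x) (add A x y)" using assms add_assoc by simp
  also have "\<dots> = add A (smul A (-1) x) (add A x z)" using assms by simp
  also have "\<dots> = add A (add A (smul A (-1) x) x) z" using assms add_assoc by simp
  also have "\<dots> = z" using n assms by simp
  finally show ?thesis .
qed

lemma smul_zero_scalar[simp]: "x \<in> carr A \<Longrightarrow> smul A 0 x = zero A"
proof -
  assume x: "x \<in> carr A"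
  have "add A (smul A 0 x) (smul A 0 x) = add A (smul A 0 x) (zero A)"
    using smul_add_scalar[OF x, of 0 0] x by simp
  then show ?thesis using add_cancel_left x by blast
qed

lemma smul_zero[simp]: "smul A c (zero A) = zero A"
proof -
  have "smul A c (zero A) = smul A c (smul A 0 (one A))" by simp
  also have "\<dots> = smul A 0 (one A)" by (simp del: smul_zero_scalar)
  finally show ?thesis by simp
qed

lemma mul_zero[simp]: "x \<in> carr A \<Longrightarrow> mul A x (zero A) = zero A"
proof -
  assume x: "x \<in> carr A"
  have "mul A x (zero A) = mul A x (smul A 0 (one A))" by simp
  also have "\<dots> = zero A" using x by (simp del: smul_zero_scalar) simp
  finally show ?thesis .
qed

lemma zero_mul[simp]: "x \<in> carr A \<Longrightarrow> mul A (zero A) x = zero A"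
proof -
  assume x: "x \<in> carr A"
  have "mul A (zero A) x = mul A (smul A 0 (one A)) x" by simp
  also have "\<dots> = zero A" using x by (simp del: smul_zero_scalar) simp
  finally show ?thesis .
qed

definition sub where "sub x y = add A x (smul A (-1) y)"

lemma sub_closed[simp,intro]: "x \<in> carr A \<Longrightarrow> y \<in> carr A \<Longrightarrow> sub x y \<in> carr A"
  unfolding sub_def by simp

lemma sub_self[simp]: "x \<in> carr A \<Longrightarrow> sub x x = zero A"
  unfolding sub_def using add_neg by simp

lemma neg_add: "y \<in> carr A \<Longrightarrow> add A (smul A (-1) y) y = zero A"
  using add_neg[of y] add_comm[of "smul A (-1) y" y] by simp

lemma sub_eq_zero: "x \<in> carr A \<Longrightarrow> y \<in> carr A \<Longrightarrow> sub x y = zero A \<Longrightarrow> x = y"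
  unfolding sub_def
proof -
  assume a: "x \<in> carr A" "y \<in> carr A" "add A x (smul A (-1) y) = zero A"
  have "x = add A x (add A (smul A (-1) y) y)" using a neg_add by simp
  also have "\<dots> = add A (add A x (smul A (-1) y)) y" by (rule add_assoc[symmetric]) (use a in auto)
  also have "\<dots> = y" using a by simp
  finally show "x = y" .
qed

lemma mul_sub_left: "x \<in> carr A \<Longrightarrow> y \<in> carr A \<Longrightarrow> z \<in> carr A \<Longrightarrow> mul A (sub x y) z = sub (mul A x z) (mul A y z)"
  unfolding sub_def by (simp add: distr)

lemma mul_sub_right: "x \<in> carr A \<Longrightarrow> y \<in> carr A \<Longrightarrow> z \<in> carr A \<Longrightarrow> mul A z (sub x y) = sub (mul A z x) (mul A z y)"
  unfolding sub_def by (simp add: distl)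

lemma smul_eq_one_iff:
  assumes "one A \<noteq> zero A" "smul A a (one A) = smul A b (one A)" shows "a = b"
proof (rule ccontr)
  assume ab: "a \<noteq> b"
  have "smul A (a + (- b)) (one A) = add A (smul A a (one A)) (smul A (-b) (one A))"
    by (rule smul_add_scalar) simp
  also have "smul A (-b) (one A) = smul A (-1) (smul A b (one A))" by simp
  also have "add A (smul A a (one A)) (smul A (-1) (smul A b (one A))) = zero A"
    using assms(2) add_neg[of "smul A b (one A)"] by simp
  finally have z: "smul A (a - b) (one A) = zero A" by simp
  have "one A = smul A (inverse (a - b)) (smul A (a - b) (one A))"
    using ab by (simp del: smul_smul add: smul_smul)
  also have "\<dots> = zero A" using z by (simp del: smul_smul)
  finally show False using assms(1) by simp
qed

definition gstep where "gstep f i acc = (if acc \<in> carr A \<and> f i \<in> carr A then add A (f i) acc else acc)"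

lemma gstep_comm: "gstep f j (gstep f i acc) = gstep f i (gstep f j acc)"
proof (cases "acc \<in> carr A")
  case True
  show ?thesis
  proof (cases "f i \<in> carr A")
    case fi: True
    show ?thesis
    proof (cases "f j \<in> carr A")
      case True
      then show ?thesis using fi \<open>acc \<in> carr A\<close> add_left_comm[of "f i" "f j" acc]
        unfolding gstep_def by simp
    next
      case False
      then show ?thesis using fi \<open>acc \<in> carr A\<close> unfolding gstep_def by simp
    qed
  next
    case False
    then show ?thesis using \<open>acc \<in> carr A\<close> unfolding gstep_def by simp
  qed
next
  case False
  then show ?thesis unfolding gstep_def by simp
qed

lemma gstep_cfc: "comp_fun_commute_on UNIV (gstep f)"
  unfolding comp_fun_commute_on_def
proof (intro allI impI)
  fix x y :: 'b
  show "gstep f y \<circ> gstep f x = gstep f x \<circ> gstep f y"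
    by (rule ext) (simp only: comp_def gstep_comm)
qed

lemma gfold_insert: "finite I \<Longrightarrow> i \<notin> I \<Longrightarrow>
   Finite_Set.fold (gstep f) z (insert i I) = gstep f i (Finite_Set.fold (gstep f) z I)"
  by (rule comp_fun_commute_on.fold_insert[OF gstep_cfc]) simp_all

lemma fsum_gstep: assumes "\<forall>i\<in>I. f i \<in> carr A" shows "fsum A f I = Finite_Set.fold (gstep f) (zero A) I"
  unfolding fsum_def
  by (rule fold_closed_eq[where B="carr A"]) (simp_all add: gstep_def assms)

lemma fold_gstep_closed: "finite I \<Longrightarrow> Finite_Set.fold (gstep f) (zero A) I \<in> carr A"
proof (induction I rule: finite_induct)
  case empty then show ?case by simp
next
  case (insert x F)
  have "Finite_Set.fold (gstep f) (zero A) (insert x F) = gstep f x (Finite_Set.fold (gstep f) (zero A) F)"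
    using gfold_insert[of F x f "zero A"] insert by simp
  then show ?case using insert.IH unfolding gstep_def by simp
qed

lemma fsum_empty[simp]: "fsum A f {} = zero A"
  unfolding fsum_def by simp

lemma fsum_closed[simp, intro]:
  assumes "\<forall>i\<in>I. f i \<in> carr A" shows "fsum A f I \<in> carr A"
proof (cases "finite I")
  case True
  have "fsum A f I = Finite_Set.fold (gstep f) (zero A) I" using assms by (rule fsum_gstep)
  then show ?thesis using fold_gstep_closed[OF True, of f] by simp
next
  case False
  then show ?thesis unfolding fsum_def by simp
qed

lemma fsum_insert:
  assumes "finite I" "i \<notin> I" "f i \<in> carr A" "\<forall>j\<in>I. f j \<in> carr A"
  shows "fsum A f (insert i I) = add A (f i) (fsum A f I)"
proof -
  have "fsum A f (insert i I) = Finite_Set.fold (gstep f) (zero A) (insert i I)"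
    using assms by (intro fsum_gstep) auto
  also have "\<dots> = gstep f i (Finite_Set.fold (gstep f) (zero A) I)"
    by (rule gfold_insert[OF assms(1,2)])
  also have "Finite_Set.fold (gstep f) (zero A) I = fsum A f I"
    using fsum_gstep[of I f] assms(4) by simp
  also have "gstep f i (fsum A f I) = add A (f i) (fsum A f I)"
    unfolding gstep_def using assms fsum_closed[of I f] by simp
  finally show ?thesis .
qed

lemma fsum_infinite[simp]: "infinite I \<Longrightarrow> fsum A f I = zero A"
  unfolding fsum_def by simp

lemma fsum_cong:
  assumes "\<And>i. i \<in> I \<Longrightarrow> f i = g i" shows "fsum A f I = fsum A g I"
  unfolding fsum_def
  by (rule fold_closed_eq[where B=UNIV]) (simp_all add: assms)

lemma fsum_induct_helper:
  assumes "finite I"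
  shows "True" by simp

lemma fsum_add:
  assumes "\<forall>i\<in>I. f i \<in> carr A" "\<forall>i\<in>I. g i \<in> carr A"
  shows "fsum A (\<lambda>i. add A (f i) (g i)) I = add A (fsum A f I) (fsum A g I)"
  using assms
proof (induction I rule: infinite_finite_induct)
  case (insert x F)
  have *: "fsum A (\<lambda>i. add A (f i) (g i)) (insert x F) = add A (add A (f x) (g x)) (fsum A (\<lambda>i. add A (f i) (g i)) F)"
    using insert by (intro fsum_insert) auto
  show ?case unfolding * using insert
    by (simp add: fsum_insert add_assoc add_left_comm)
qed auto

lemma fsum_smul:
  assumes "\<forall>i\<in>I. f i \<in> carr A"
  shows "fsum A (\<lambda>i. smul A c (f i)) I = smul A c (fsum A f I)"
  using assms
proof (induction I rule: infinite_finite_induct)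
  case (insert x F)
  then show ?case by (simp add: fsum_insert smul_add)
qed auto

lemma fsum_mul_left:
  assumes "\<forall>i\<in>I. f i \<in> carr A" "a \<in> carr A"
  shows "fsum A (\<lambda>i. mul A a (f i)) I = mul A a (fsum A f I)"
  using assms
proof (induction I rule: infinite_finite_induct)
  case (insert x F)
  then show ?case by (simp add: fsum_insert distl)
qed auto

lemma fsum_mul_right:
  assumes "\<forall>i\<in>I. f i \<in> carr A" "a \<in> carr A"
  shows "fsum A (\<lambda>i. mul A (f i) a) I = mul A (fsum A f I) a"
  using assms
proof (induction I rule: infinite_finite_induct)
  case (insert x F)
  then show ?case by (simp add: fsum_insert distr)
qed auto

lemma fsum_zero_terms:
  assumes "\<forall>i\<in>I. f i = zero A"
  shows "fsum A f I = zero A"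
  using assms
proof (induction I rule: infinite_finite_induct)
  case (insert x F)
  then show ?case by (simp add: fsum_insert)
qed auto

lemma fsum_mono_neutral:
  assumes "finite J" "I \<subseteq> J" "\<forall>i\<in>J. f i \<in> carr A" "\<forall>i\<in>J - I. f i = zero A"
  shows "fsum A f J = fsum A f I"
proof -
  have "finite (J - I)" using assms by auto
  have "\<And>K. K \<subseteq> J - I \<Longrightarrow> fsum A f (I \<union> K) = fsum A f I"
  proof -
    fix K assume "K \<subseteq> J - I"
    then have "finite K" using \<open>finite (J - I)\<close> finite_subset by blast
    then show "fsum A f (I \<union> K) = fsum A f I" using \<open>K \<subseteq> J - I\<close>
    proof (induction K rule: finite_induct)
      case (insert x F)
      have "finite I" using assms finite_subset by blast
      then have "fsum A f (insert x (I \<union> F)) = add A (f x) (fsum A f (I \<union> F))"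
        using insert assms by (intro fsum_insert) auto
      moreover have "fsum A f I \<in> carr A" using assms by (intro fsum_closed) auto
      ultimately show ?case using insert assms by auto
    qed simp
  qed
  from this[of "J - I"] assms show ?thesis by (simp add: Un_absorb1 Un_Diff_cancel)
qed

lemma fsum_union:
  assumes "finite I" "finite J" "I \<inter> J = {}" "\<forall>i\<in>I \<union> J. f i \<in> carr A"
  shows "fsum A f (I \<union> J) = add A (fsum A f I) (fsum A f J)"
  using assms
proof (induction I rule: finite_induct)
  case (insert x F)
  have "fsum A f (insert x F \<union> J) = fsum A f (insert x (F \<union> J))" by simp
  also have "\<dots> = add A (f x) (fsum A f (F \<union> J))" using insert by (intro fsum_insert) auto
  finally show ?case using insert by (simp add: fsum_insert add_assoc)
qed simp

lemma fsum_single[simp]: "f i \<in> carr A \<Longrightarrow> fsum A f {i} = f i"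
  using fsum_insert[of "{}" i f] by simp

lemma fsum_reindex:
  assumes "inj_on h I" "\<forall>i\<in>h ` I. f i \<in> carr A"
  shows "fsum A f (h ` I) = fsum A (f \<circ> h) I"
  using assms
proof (induction I rule: infinite_finite_induct)
  case (infinite F)
  then have "infinite (h ` F)" using finite_imageD by blast
  then show ?case using infinite by simp
next
  case (insert x F)
  then show ?case by (simp add: fsum_insert)
qed simp

lemma fsum_swap:
  assumes "finite I" "finite J" "\<forall>i\<in>I. \<forall>j\<in>J. f i j \<in> carr A"
  shows "fsum A (\<lambda>i. fsum A (f i) J) I = fsum A (\<lambda>j. fsum A (\<lambda>i. f i j) I) J"
  using assms
proof (induction I rule: finite_induct)
  case empty then show ?case by (simp add: fsum_zero_terms)
next
  case (insert x F)
  have "fsum A (\<lambda>i. fsum A (f i) J) (insert x F) = add A (fsum A (f x) J) (fsum A (\<lambda>i. fsum A (f i) J) F)"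
    using insert by (intro fsum_insert) auto
  also have "\<dots> = fsum A (\<lambda>j. add A (f x j) (fsum A (\<lambda>i. f i j) F)) J"
    using insert by (simp add: fsum_add)
  also have "\<dots> = fsum A (\<lambda>j. fsum A (\<lambda>i. f i j) (insert x F)) J"
    using insert by (intro fsum_cong) (simp add: fsum_insert)
  finally show ?case .
qed

end

lemma fsum_hom:
  assumes "ka A" "ka B" "\<forall>i\<in>I. f i \<in> carr A"
    "\<And>x y. x \<in> carr A \<Longrightarrow> y \<in> carr A \<Longrightarrow> h (add A x y) = add B (h x) (h y)"
    "h (zero A) = zero B" "\<And>x. x \<in> carr A \<Longrightarrow> h x \<in> carr B"
  shows "h (fsum A f I) = fsum B (\<lambda>i. h (f i)) I"
  using assms(3)
proof (induction I rule: infinite_finite_induct)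
  case (insert x F)
  have "h (fsum A f (insert x F)) = h (add A (f x) (fsum A f F))"
    using insert ka.fsum_insert[OF assms(1), of F x f] by simp
  also have "\<dots> = add B (h (f x)) (h (fsum A f F))"
    using insert assms ka.fsum_closed[OF assms(1), of F f] by simp
  also have "\<dots> = fsum B (\<lambda>i. h (f i)) (insert x F)"
    using insert assms ka.fsum_insert[OF assms(2), of F x "\<lambda>i. h (f i)"] by (simp add: comp_def)
  finally show ?case .
qed (auto simp: assms ka.fsum_infinite[OF assms(1)] ka.fsum_infinite[OF assms(2)] ka.fsum_empty[OF assms(1)] ka.fsum_empty[OF assms(2)])

section \<open>Free module basics\<close>

lemma lookup_tscale[simp]: "Poly_Mapping.lookup (tscale c v) p = c * Poly_Mapping.lookup v p"
  unfolding tscale_def by (simp add: Poly_Mapping.map.rep_eq when_def)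

lemma lookup_tgen: "Poly_Mapping.lookup (tgen a b) p = (if p = (a, b) then 1 else 0)"
  unfolding tgen_def by (simp add: lookup_single when_def)

lemma keys_tgen[simp]: "Poly_Mapping.keys (tgen a b) = {(a, b)}"
  unfolding tgen_def by simp

lemma tscale_add: "tscale c (v + w) = tscale c v + tscale c w"
  by (rule poly_mapping_eqI) (simp add: lookup_add algebra_simps)

lemma tscale_add_scalar: "tscale (c + d) v = tscale c v + tscale d v"
  by (rule poly_mapping_eqI) (simp add: lookup_add algebra_simps)

lemma tscale_tscale[simp]: "tscale c (tscale d v) = tscale (c * d) v"
  by (rule poly_mapping_eqI) simp

lemma tscale_one[simp]: "tscale 1 v = v"
  by (rule poly_mapping_eqI) simp

lemma tscale_zero_scalar[simp]: "tscale 0 v = 0"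
  by (rule poly_mapping_eqI) simp

lemma tscale_zero[simp]: "tscale c 0 = 0"
  by (rule poly_mapping_eqI) simp

lemma tscale_minus: "tscale c (v - w) = tscale c v - tscale c w"
  by (rule poly_mapping_eqI) (simp add: lookup_minus algebra_simps)

lemma tscale_uminus: "tscale c (- v) = - tscale c v"
  by (rule poly_mapping_eqI) simp

lemma tscale_neg1: "tscale (-1) v = - v"
  by (rule poly_mapping_eqI) simp

lemma tscale_sum: "tscale c (sum f I) = sum (\<lambda>i. tscale c (f i)) I"
  by (induction I rule: infinite_finite_induct) (simp_all add: tscale_add)

lemma keys_tscale: "Poly_Mapping.keys (tscale c v) \<subseteq> Poly_Mapping.keys v"
  by (auto simp: in_keys_iff)

lemma keys_minus: "Poly_Mapping.keys (v - w) \<subseteq> Poly_Mapping.keys v \<union> Poly_Mapping.keys w"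
  by (auto simp: in_keys_iff lookup_minus)

lemma keys_uminus[simp]: "Poly_Mapping.keys (- v) = Poly_Mapping.keys v"
  by (auto simp: in_keys_iff)

lemma keys_sum: "Poly_Mapping.keys (sum f I) \<subseteq> (\<Union>i\<in>I. Poly_Mapping.keys (f i))"
proof (induction I rule: infinite_finite_induct)
  case (insert x F)
  then show ?case using keys_add[of "f x" "sum f F"] by auto
qed auto

lemma free_expand: "v = (\<Sum>p\<in>Poly_Mapping.keys v. tscale (Poly_Mapping.lookup v p) (tgen (fst p) (snd p)))"
proof (rule poly_mapping_eqI)
  fix k
  have "Poly_Mapping.lookup (\<Sum>p\<in>Poly_Mapping.keys v. tscale (Poly_Mapping.lookup v p) (tgen (fst p) (snd p))) k
      = (\<Sum>p\<in>Poly_Mapping.keys v. Poly_Mapping.lookup v p * (if k = p then 1 else 0))"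
    by (simp add: lookup_sum lookup_tgen)
  also have "\<dots> = (\<Sum>p\<in>Poly_Mapping.keys v. if k = p then Poly_Mapping.lookup v p else 0)"
    by (rule sum.cong) auto
  also have "\<dots> = Poly_Mapping.lookup v k" by (simp add: in_keys_iff)
  finally show "Poly_Mapping.lookup v k = Poly_Mapping.lookup (\<Sum>p\<in>Poly_Mapping.keys v. tscale (Poly_Mapping.lookup v p) (tgen (fst p) (snd p))) k" by simp
qed

lemma tfree_iff: "v \<in> tfree R \<longleftrightarrow> Poly_Mapping.keys v \<subseteq> carr R \<times> carr R"
  unfolding tfree_def by simp

lemma tfree_add[intro]: "v \<in> tfree R \<Longrightarrow> w \<in> tfree R \<Longrightarrow> v + w \<in> tfree R"
  unfolding tfree_iff by (rule order_trans[OF keys_add], rule Un_least)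

lemma tfree_minus[intro]: "v \<in> tfree R \<Longrightarrow> w \<in> tfree R \<Longrightarrow> v - w \<in> tfree R"
  unfolding tfree_iff by (rule order_trans[OF keys_minus], rule Un_least)

lemma tfree_uminus[intro]: "v \<in> tfree R \<Longrightarrow> - v \<in> tfree R"
  unfolding tfree_iff by simp

lemma tfree_tscale[intro]: "v \<in> tfree R \<Longrightarrow> tscale c v \<in> tfree R"
  unfolding tfree_iff by (rule order_trans[OF keys_tscale])

lemma tfree_zero[simp, intro]: "0 \<in> tfree R"
  unfolding tfree_iff by simp

lemma tfree_tgen[intro]: "a \<in> carr R \<Longrightarrow> b \<in> carr R \<Longrightarrow> tgen a b \<in> tfree R"
  unfolding tfree_iff by simp

lemma tfree_sum[intro]: "(\<And>i. i \<in> I \<Longrightarrow> f i \<in> tfree R) \<Longrightarrow> sum f I \<in> tfree R"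
proof (induction I rule: infinite_finite_induct)
  case (insert x F)
  have "f x \<in> tfree R" "sum f F \<in> tfree R" using insert by simp_all
  then show ?case using insert(1,2) by (simp add: tfree_add)
qed simp_all

lemma tfree_keys: "v \<in> tfree R \<Longrightarrow> p \<in> Poly_Mapping.keys v \<Longrightarrow> fst p \<in> carr R \<and> snd p \<in> carr R"
proof -
  assume "v \<in> tfree R" "p \<in> Poly_Mapping.keys v"
  then have "p \<in> carr R \<times> carr R" unfolding tfree_iff by (rule subsetD)
  then show ?thesis by (simp add: mem_Times_iff)
qed

definition tG :: "('k::field, 'a) kalg \<Rightarrow> ('a \<Rightarrow> 'a) \<Rightarrow> 'a \<times> 'a \<Rightarrow> 'a \<times> 'a \<Rightarrow> ('k, 'a) free2" where
  "tG R E p p' = tgen (mul R (fst p) (E (mul R (snd p) (fst p')))) (snd p')"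

lemma tmul_raw_alt: "tmul_raw R E v w =
   (\<Sum>p\<in>Poly_Mapping.keys v. \<Sum>p'\<in>Poly_Mapping.keys w. tscale (Poly_Mapping.lookup v p * Poly_Mapping.lookup w p') (tG R E p p'))"
  unfolding tmul_raw_def tG_def by simp

lemma tmul_raw_gen:
  assumes "finite P" "finite P'" "Poly_Mapping.keys v \<subseteq> P" "Poly_Mapping.keys w \<subseteq> P'"
  shows "tmul_raw R E v w = (\<Sum>p\<in>P. \<Sum>p'\<in>P'. tscale (Poly_Mapping.lookup v p * Poly_Mapping.lookup w p') (tG R E p p'))"
proof -
  have "tmul_raw R E v w = (\<Sum>p\<in>Poly_Mapping.keys v. \<Sum>p'\<in>P'. tscale (Poly_Mapping.lookup v p * Poly_Mapping.lookup w p') (tG R E p p'))"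
    unfolding tmul_raw_alt
    by (rule sum.cong[OF refl], rule sum.mono_neutral_left) (use assms in \<open>auto simp: in_keys_iff\<close>)
  also have "\<dots> = (\<Sum>p\<in>P. \<Sum>p'\<in>P'. tscale (Poly_Mapping.lookup v p * Poly_Mapping.lookup w p') (tG R E p p'))"
    by (rule sum.mono_neutral_left) (use assms in \<open>auto simp: in_keys_iff\<close>)
  finally show ?thesis .
qed

lemma tmul_add_left: "tmul_raw R E (v + v') w = tmul_raw R E v w + tmul_raw R E v' w"
proof -
  let ?P = "Poly_Mapping.keys v \<union> Poly_Mapping.keys v'"
  have k: "Poly_Mapping.keys (v + v') \<subseteq> ?P" by (rule keys_add)
  have e1: "tmul_raw R E (v + v') w = (\<Sum>p\<in>?P. \<Sum>p'\<in>Poly_Mapping.keys w. tscale (Poly_Mapping.lookup (v + v') p * Poly_Mapping.lookup w p') (tG R E p p'))"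
    by (rule tmul_raw_gen) (use k in auto)
  have e2: "tmul_raw R E v w = (\<Sum>p\<in>?P. \<Sum>p'\<in>Poly_Mapping.keys w. tscale (Poly_Mapping.lookup v p * Poly_Mapping.lookup w p') (tG R E p p'))"
    by (rule tmul_raw_gen) auto
  have e3: "tmul_raw R E v' w = (\<Sum>p\<in>?P. \<Sum>p'\<in>Poly_Mapping.keys w. tscale (Poly_Mapping.lookup v' p * Poly_Mapping.lookup w p') (tG R E p p'))"
    by (rule tmul_raw_gen) auto
  show ?thesis unfolding e1 e2 e3
    by (simp only: lookup_add distrib_right tscale_add_scalar sum.distrib)
qed

lemma tmul_add_right: "tmul_raw R E v (w + w') = tmul_raw R E v w + tmul_raw R E v w'"
proof -
  let ?P = "Poly_Mapping.keys w \<union> Poly_Mapping.keys w'"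
  have k: "Poly_Mapping.keys (w + w') \<subseteq> ?P" by (rule keys_add)
  have e1: "tmul_raw R E v (w + w') = (\<Sum>p\<in>Poly_Mapping.keys v. \<Sum>p'\<in>?P. tscale (Poly_Mapping.lookup v p * Poly_Mapping.lookup (w + w') p') (tG R E p p'))"
    by (rule tmul_raw_gen) (use k in auto)
  have e2: "tmul_raw R E v w = (\<Sum>p\<in>Poly_Mapping.keys v. \<Sum>p'\<in>?P. tscale (Poly_Mapping.lookup v p * Poly_Mapping.lookup w p') (tG R E p p'))"
    by (rule tmul_raw_gen) auto
  have e3: "tmul_raw R E v w' = (\<Sum>p\<in>Poly_Mapping.keys v. \<Sum>p'\<in>?P. tscale (Poly_Mapping.lookup v p * Poly_Mapping.lookup w' p') (tG R E p p'))"
    by (rule tmul_raw_gen) auto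
  show ?thesis unfolding e1 e2 e3
    by (simp only: lookup_add distrib_left tscale_add_scalar sum.distrib)
qed

lemma tmul_scale_left: "tmul_raw R E (tscale c v) w = tscale c (tmul_raw R E v w)"
proof -
  have e1: "tmul_raw R E (tscale c v) w = (\<Sum>p\<in>Poly_Mapping.keys v. \<Sum>p'\<in>Poly_Mapping.keys w. tscale (Poly_Mapping.lookup (tscale c v) p * Poly_Mapping.lookup w p') (tG R E p p'))"
    by (rule tmul_raw_gen) (auto dest: keys_tscale[THEN subsetD])
  show ?thesis unfolding e1 unfolding tmul_raw_alt tscale_sum
    by (simp only: lookup_tscale tscale_tscale mult.assoc)
qed

lemma tmul_scale_right: "tmul_raw R E v (tscale c w) = tscale c (tmul_raw R E v w)"
proof -
  have e1: "tmul_raw R E v (tscale c w) = (\<Sum>p\<in>Poly_Mapping.keys v. \<Sum>p'\<in>Poly_Mapping.keys w. tscale (Poly_Mapping.lookup v p * Poly_Mapping.lookup (tscale c w) p') (tG R E p p'))"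
    by (rule tmul_raw_gen) (auto dest: keys_tscale[THEN subsetD])
  show ?thesis unfolding e1 unfolding tmul_raw_alt tscale_sum
    by (simp only: lookup_tscale tscale_tscale mult.assoc mult.left_commute)
qed

lemma tmul_zero_left[simp]: "tmul_raw R E 0 w = 0"
  by (simp add: tmul_raw_alt)

lemma tmul_zero_right[simp]: "tmul_raw R E v 0 = 0"
  by (simp add: tmul_raw_alt)

lemma tmul_minus_left: "tmul_raw R E (v - v') w = tmul_raw R E v w - tmul_raw R E v' w"
proof -
  have "tmul_raw R E ((v - v') + v') w = tmul_raw R E (v - v') w + tmul_raw R E v' w" by (rule tmul_add_left)
  then show ?thesis by (simp add: eq_diff_eq)
qed

lemma tmul_minus_right: "tmul_raw R E v (w - w') = tmul_raw R E v w - tmul_raw R E v w'"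
proof -
  have "tmul_raw R E v ((w - w') + w') = tmul_raw R E v (w - w') + tmul_raw R E v w'" by (rule tmul_add_right)
  then show ?thesis by (simp add: eq_diff_eq)
qed

lemma tmul_sum_left: "tmul_raw R E (sum f I) w = (\<Sum>i\<in>I. tmul_raw R E (f i) w)"
  by (induction I rule: infinite_finite_induct) (simp_all add: tmul_add_left)

lemma tmul_sum_right: "tmul_raw R E v (sum f I) = (\<Sum>i\<in>I. tmul_raw R E v (f i))"
  by (induction I rule: infinite_finite_induct) (simp_all add: tmul_add_right)

lemma tmul_tgen: "tmul_raw R E (tgen a b) (tgen c d) = tgen (mul R a (E (mul R b c))) d"
  by (simp add: tmul_raw_alt lookup_tgen tG_def)

section \<open>Quotient machinery\<close>

locale bcq = ka R for R :: "('k::field, 'a) kalg" +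
  fixes S :: "'a set" and E :: "'a \<Rightarrow> 'a"
  assumes subalg: "subalgebra R S" and bim: "bimodule_map R S E"
begin

lemma S_carr[simp, intro]: "x \<in> S \<Longrightarrow> x \<in> carr R"
  using subalg unfolding subalgebra_def by blast

lemma one_S[simp, intro]: "one R \<in> S"
  using subalg unfolding subalgebra_def by blast

lemma smul_S[simp, intro]: "x \<in> S \<Longrightarrow> smul R c x \<in> S"
  using subalg unfolding subalgebra_def by blast

lemma E_S[simp, intro]: "m \<in> carr R \<Longrightarrow> E m \<in> S"
  using bim unfolding bimodule_map_def by blast

lemma E_carr[simp, intro]: "m \<in> carr R \<Longrightarrow> E m \<in> carr R"
  using E_S S_carr by blast

lemma E_add: "m \<in> carr R \<Longrightarrow> m' \<in> carr R \<Longrightarrow> E (add R m m') = add R (E m) (E m')"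
  using bim unfolding bimodule_map_def by blast

lemma E_left: "x \<in> S \<Longrightarrow> m \<in> carr R \<Longrightarrow> E (mul R x m) = mul R x (E m)"
  using bim unfolding bimodule_map_def by blast

lemma E_right: "x \<in> S \<Longrightarrow> m \<in> carr R \<Longrightarrow> E (mul R m x) = mul R (E m) x"
  using bim unfolding bimodule_map_def by blast

lemma E_smul: "m \<in> carr R \<Longrightarrow> E (smul R c m) = smul R c (E m)"
proof -
  assume m: "m \<in> carr R"
  have "smul R c m = mul R (smul R c (one R)) m" using m by simp
  then have "E (smul R c m) = mul R (smul R c (one R)) (E m)"
    using E_left[of "smul R c (one R)" m] m by simp
  then show ?thesis using m by simp
qed

abbreviation TR where "TR \<equiv> trel R S"
abbreviation TF where "TF \<equiv> tfree R"

lemma trel_tfree: "x \<in> TR \<Longrightarrow> x \<in> TF"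
proof (induction rule: trel.induct)
  case trel_zero then show ?case by simp
next
  case (trel_add v w) then show ?case by (simp add: tfree_add)
next
  case (trel_scale v c) then show ?case by (simp add: tfree_tscale)
next
  case (trel_addl a a' b) then show ?case by (intro tfree_minus tfree_tgen closed)
next
  case (trel_addr a b b') then show ?case by (intro tfree_minus tfree_tgen closed)
next
  case (trel_smull a b c) then show ?case by (intro tfree_minus tfree_tgen tfree_tscale closed)
next
  case (trel_smulr a b c) then show ?case by (intro tfree_minus tfree_tgen tfree_tscale closed)
next
  case (trel_bal a b s) then show ?case by (intro tfree_minus tfree_tgen closed) simp_all
qed

lemma trel_uminus: "x \<in> TR \<Longrightarrow> - x \<in> TR"
proof -
  assume "x \<in> TR"
  then have "tscale (-1) x \<in> TR" by (rule trel_scale)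
  then show ?thesis by (simp add: tscale_neg1)
qed

lemma trel_minus: "x \<in> TR \<Longrightarrow> y \<in> TR \<Longrightarrow> x - y \<in> TR"
proof -
  assume "x \<in> TR" "y \<in> TR"
  then have "x + - y \<in> TR" by (intro trel_add trel_uminus)
  then show ?thesis by simp
qed

lemma trel_sum: "(\<And>i. i \<in> I \<Longrightarrow> f i \<in> TR) \<Longrightarrow> sum f I \<in> TR"
proof (induction I rule: infinite_finite_induct)
  case (insert x F)
  then show ?case by (simp add: trel_add)
qed (simp_all add: trel_zero)

lemma trel_sym: "x - y \<in> TR \<Longrightarrow> y - x \<in> TR"
proof -
  assume "x - y \<in> TR"
  then have "- (x - y) \<in> TR" by (rule trel_uminus)
  then show ?thesis by simp
qed

lemma trel_trans: "x - y \<in> TR \<Longrightarrow> y - z \<in> TR \<Longrightarrow> x - z \<in> TR"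
proof -
  assume "x - y \<in> TR" "y - z \<in> TR"
  then have "(x - y) + (y - z) \<in> TR" by (rule trel_add)
  then show ?thesis by simp
qed

lemma tclass_eq: "tclass R S v = tclass R S w \<longleftrightarrow> v - w \<in> TR"
proof
  assume h: "tclass R S v = tclass R S w"
  have "v \<in> tclass R S v" unfolding tclass_def using trel_zero by force
  then have "v \<in> tclass R S w" using h by simp
  then obtain r where "v = w + r" "r \<in> TR" unfolding tclass_def by blast
  then show "v - w \<in> TR" by simp
next
  assume h: "v - w \<in> TR"
  show "tclass R S v = tclass R S w"
  proof (rule set_eqI)
    fix x
    show "x \<in> tclass R S v \<longleftrightarrow> x \<in> tclass R S w"
    proof
      assume "x \<in> tclass R S v"
      then obtain r where "x = v + r" "r \<in> TR" unfolding tclass_def by blast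
      moreover have "(v - w) + r \<in> TR" using h \<open>r \<in> TR\<close> by (rule trel_add)
      ultimately show "x \<in> tclass R S w" unfolding tclass_def
        by (intro CollectI exI[of _ "(v - w) + r"]) simp
    next
      assume "x \<in> tclass R S w"
      then obtain r where "x = w + r" "r \<in> TR" unfolding tclass_def by blast
      moreover have "(w - v) + r \<in> TR" using trel_sym[OF h] \<open>r \<in> TR\<close> by (rule trel_add)
      ultimately show "x \<in> tclass R S v" unfolding tclass_def
        by (intro CollectI exI[of _ "(w - v) + r"]) simp
    qed
  qed
qed

lemma trep_tclass: "trep (tclass R S v) - v \<in> TR"
proof -
  have "v \<in> tclass R S v" unfolding tclass_def using trel_zero by force
  then have "trep (tclass R S v) \<in> tclass R S v" unfolding trep_def by (rule someI)
  then obtain r where "trep (tclass R S v) = v + r" "r \<in> TR" unfolding tclass_def by blast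
  then show ?thesis by simp
qed

section \<open>Linearity modulo relations\<close>

definition lin_mod :: "(('k, 'a) free2 \<Rightarrow> ('k, 'a) free2) \<Rightarrow> bool" where
  "lin_mod F \<longleftrightarrow> (\<forall>v\<in>TF. \<forall>w\<in>TF. F (v + w) - (F v + F w) \<in> TR) \<and>
                 (\<forall>c. \<forall>v\<in>TF. F (tscale c v) - tscale c (F v) \<in> TR)"

lemma lin_mod_zero:
  assumes lm: "lin_mod F" and gen: "\<And>a b. a \<in> carr R \<Longrightarrow> b \<in> carr R \<Longrightarrow> F (tgen a b) \<in> TR"
    and v: "v \<in> TF"
  shows "F v \<in> TR"
proof -
  have add: "\<And>v w. v \<in> TF \<Longrightarrow> w \<in> TF \<Longrightarrow> F (v + w) - (F v + F w) \<in> TR"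
    and sc: "\<And>c v. v \<in> TF \<Longrightarrow> F (tscale c v) - tscale c (F v) \<in> TR"
    using lm unfolding lin_mod_def by blast+
  have z: "F 0 \<in> TR"
  proof -
    have "F (0 + 0) - (F 0 + F 0) \<in> TR" using add[of 0 0] by simp
    then have "- F 0 \<in> TR" by simp
    then show ?thesis using trel_uminus by fastforce
  qed
  have main: "\<And>K. finite K \<Longrightarrow> K \<subseteq> carr R \<times> carr R \<Longrightarrow>
      F (\<Sum>p\<in>K. tscale (c p) (tgen (fst p) (snd p))) \<in> TR" for c
  proof -
    fix K :: "('a \<times> 'a) set"
    assume "finite K" "K \<subseteq> carr R \<times> carr R"
    then show "F (\<Sum>p\<in>K. tscale (c p) (tgen (fst p) (snd p))) \<in> TR"
    proof (induction K rule: finite_induct)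
      case empty then show ?case using z by simp
    next
      case (insert x K)
      let ?t = "tscale (c x) (tgen (fst x) (snd x))"
      let ?s = "\<Sum>p\<in>K. tscale (c p) (tgen (fst p) (snd p))"
      have xc: "fst x \<in> carr R" "snd x \<in> carr R" using insert(4) by (auto simp: mem_Times_iff)
      have tF: "?t \<in> TF" using xc by blast
      have sF: "?s \<in> TF" using insert(4) by (intro tfree_sum tfree_tscale tfree_tgen) (auto simp: mem_Times_iff)
      have "F ?t - tscale (c x) (F (tgen (fst x) (snd x))) \<in> TR" using sc xc by blast
      moreover have "tscale (c x) (F (tgen (fst x) (snd x))) \<in> TR"
        using gen[OF xc] by (rule trel_scale)
      ultimately have t: "F ?t \<in> TR" using trel_add by fastforce
      have s: "F ?s \<in> TR" using insert by simp
      have "F (?t + ?s) - (F ?t + F ?s) \<in> TR" using add[OF tF sF] .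
      moreover have "F ?t + F ?s \<in> TR" using t s by (rule trel_add)
      ultimately have "F (?t + ?s) \<in> TR" using trel_add by fastforce
      then show ?case using insert(1,2) by simp
    qed
  qed
  have "F v = F (\<Sum>p\<in>Poly_Mapping.keys v. tscale (Poly_Mapping.lookup v p) (tgen (fst p) (snd p)))"
    using free_expand[of v] by simp
  also have "\<dots> \<in> TR" using v by (intro main) (auto simp: tfree_iff)
  finally show ?thesis .
qed

lemma lin_mod_exact:
  assumes "\<And>v w. v \<in> TF \<Longrightarrow> w \<in> TF \<Longrightarrow> F (v + w) = F v + F w"
    and "\<And>c v. v \<in> TF \<Longrightarrow> F (tscale c v) = tscale c (F v)"
  shows "lin_mod F"
  unfolding lin_mod_def
proof (intro conjI ballI allI)
  fix v w assume "v \<in> TF" "w \<in> TF"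
  then show "F (v + w) - (F v + F w) \<in> TR" using assms(1) trel_zero by simp
next
  fix c v assume "v \<in> TF"
  then show "F (tscale c v) - tscale c (F v) \<in> TR" using assms(2) trel_zero by simp
qed

lemma lin_mod_diff:
  assumes "lin_mod F" "lin_mod G" shows "lin_mod (\<lambda>v. F v - G v)"
proof -
  have a1: "\<And>v w. v \<in> TF \<Longrightarrow> w \<in> TF \<Longrightarrow> F (v + w) - (F v + F w) \<in> TR"
    and s1: "\<And>c v. v \<in> TF \<Longrightarrow> F (tscale c v) - tscale c (F v) \<in> TR"
    using assms(1) unfolding lin_mod_def by blast+
  have a2: "\<And>v w. v \<in> TF \<Longrightarrow> w \<in> TF \<Longrightarrow> G (v + w) - (G v + G w) \<in> TR"
    and s2: "\<And>c v. v \<in> TF \<Longrightarrow> G (tscale c v) - tscale c (G v) \<in> TR"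
    using assms(2) unfolding lin_mod_def by blast+
  have e1: "F (v + w) - G (v + w) - ((F v - G v) + (F w - G w)) =
        (F (v + w) - (F v + F w)) - (G (v + w) - (G v + G w))" for v w
    by (simp add: algebra_simps)
  have e2: "F (tscale c v) - G (tscale c v) - tscale c (F v - G v) =
        (F (tscale c v) - tscale c (F v)) - (G (tscale c v) - tscale c (G v))" for c v
    by (simp add: algebra_simps tscale_minus)
  show ?thesis unfolding lin_mod_def
  proof (intro conjI ballI allI)
    fix v w assume "v \<in> TF" "w \<in> TF"
    then show "F (v + w) - G (v + w) - ((F v - G v) + (F w - G w)) \<in> TR"
      unfolding e1 by (intro trel_minus a1 a2)
  next
    fix c v assume "v \<in> TF"
    then show "F (tscale c v) - G (tscale c v) - tscale c (F v - G v) \<in> TR"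
      unfolding e2 by (intro trel_minus s1 s2)
  qed
qed

lemma lin_mod_apply:
  assumes "lin_mod F" "lin_mod G"
    and "\<And>a b. a \<in> carr R \<Longrightarrow> b \<in> carr R \<Longrightarrow> F (tgen a b) - G (tgen a b) \<in> TR"
    and "v \<in> TF"
  shows "F v - G v \<in> TR"
  using lin_mod_zero[OF lin_mod_diff[OF assms(1,2)]] assms(3,4) by blast

end

lemma lin_eq_free:
  assumes F: "\<And>v w. v \<in> tfree R \<Longrightarrow> w \<in> tfree R \<Longrightarrow> F (v + w) = F v + F w"
    "\<And>c v. v \<in> tfree R \<Longrightarrow> F (tscale c v) = tscale c (F v)"
    and G: "\<And>v w. v \<in> tfree R \<Longrightarrow> w \<in> tfree R \<Longrightarrow> G (v + w) = G v + G w"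
    "\<And>c v. v \<in> tfree R \<Longrightarrow> G (tscale c v) = tscale c (G v)"
    and gen: "\<And>a b. a \<in> carr R \<Longrightarrow> b \<in> carr R \<Longrightarrow> F (tgen a b) = G (tgen a b)"
    and v: "v \<in> tfree R"
  shows "F v = G v"
proof -
  have F0: "F 0 = 0" using F(2)[of 0 0] by simp
  have G0: "G 0 = 0" using G(2)[of 0 0] by simp
  have main: "\<And>K. finite K \<Longrightarrow> K \<subseteq> carr R \<times> carr R \<Longrightarrow>
      F (\<Sum>p\<in>K. tscale (c p) (tgen (fst p) (snd p))) = G (\<Sum>p\<in>K. tscale (c p) (tgen (fst p) (snd p)))" for c
  proof -
    fix K :: "('a \<times> 'a) set"
    assume "finite K" "K \<subseteq> carr R \<times> carr R"
    then show "F (\<Sum>p\<in>K. tscale (c p) (tgen (fst p) (snd p))) = G (\<Sum>p\<in>K. tscale (c p) (tgen (fst p) (snd p)))"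
    proof (induction K rule: finite_induct)
      case empty then show ?case using F0 G0 by simp
    next
      case (insert x K)
      let ?t = "tscale (c x) (tgen (fst x) (snd x))"
      let ?s = "\<Sum>p\<in>K. tscale (c p) (tgen (fst p) (snd p))"
      have xc: "fst x \<in> carr R" "snd x \<in> carr R" using insert(4) by (auto simp: mem_Times_iff)
      have tF: "?t \<in> tfree R" using xc by blast
      have sF: "?s \<in> tfree R" using insert(4) by (intro tfree_sum tfree_tscale tfree_tgen) (auto simp: mem_Times_iff)
      have "F (?t + ?s) = F ?t + F ?s" using F(1)[OF tF sF] .
      also have "F ?t = G ?t" using F(2) G(2) gen xc by (simp add: tfree_tgen)
      also have "F ?s = G ?s" using insert by simp
      also have "G ?t + G ?s = G (?t + ?s)" using G(1)[OF tF sF] by simp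
      finally show ?case using insert(1,2) by simp
    qed
  qed
  have "F v = F (\<Sum>p\<in>Poly_Mapping.keys v. tscale (Poly_Mapping.lookup v p) (tgen (fst p) (snd p)))"
    using free_expand[of v] by simp
  also have "\<dots> = G (\<Sum>p\<in>Poly_Mapping.keys v. tscale (Poly_Mapping.lookup v p) (tgen (fst p) (snd p)))"
    using v by (intro main) (auto simp: tfree_iff)
  also have "\<dots> = G v" using free_expand[of v] by simp
  finally show ?thesis .
qed

context bcq
begin

lemma tG_tfree: "p \<in> Poly_Mapping.keys v \<Longrightarrow> p' \<in> Poly_Mapping.keys w \<Longrightarrow> v \<in> TF \<Longrightarrow> w \<in> TF \<Longrightarrow> tG R E p p' \<in> TF"
proof -
  assume a: "p \<in> Poly_Mapping.keys v" "p' \<in> Poly_Mapping.keys w" "v \<in> TF" "w \<in> TF"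
  have "fst p \<in> carr R" "snd p \<in> carr R" using tfree_keys[OF a(3) a(1)] by simp_all
  moreover have "fst p' \<in> carr R" "snd p' \<in> carr R" using tfree_keys[OF a(4) a(2)] by simp_all
  ultimately show ?thesis unfolding tG_def by (intro tfree_tgen closed E_carr)
qed

lemma tmul_tfree[intro]: "v \<in> TF \<Longrightarrow> w \<in> TF \<Longrightarrow> tmul_raw R E v w \<in> TF"
  unfolding tmul_raw_alt by (intro tfree_sum tfree_tscale tG_tfree)

lemma gen_right:
  assumes "\<And>c d. c \<in> carr R \<Longrightarrow> d \<in> carr R \<Longrightarrow> tmul_raw R E g (tgen c d) \<in> TR" "w \<in> TF"
  shows "tmul_raw R E g w \<in> TR"
  by (rule lin_mod_zero[OF lin_mod_exact]) (simp_all add: tmul_add_right tmul_scale_right assms)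

lemma gen_left:
  assumes "\<And>a b. a \<in> carr R \<Longrightarrow> b \<in> carr R \<Longrightarrow> tmul_raw R E (tgen a b) g \<in> TR" "v \<in> TF"
  shows "tmul_raw R E v g \<in> TR"
  by (rule lin_mod_zero[where F="\<lambda>v. tmul_raw R E v g", OF lin_mod_exact]) (simp_all add: tmul_add_left tmul_scale_left assms)

lemma tmul_trel_left: "x \<in> TR \<Longrightarrow> w \<in> TF \<Longrightarrow> tmul_raw R E x w \<in> TR"
proof (induction rule: trel.induct)
  case trel_zero then show ?case by (simp add: trel.trel_zero)
next
  case (trel_add v w') then show ?case by (simp add: tmul_add_left trel.trel_add)
next
  case (trel_scale v c) then show ?case by (simp add: tmul_scale_left trel.trel_scale)
next
  case (trel_addl a a' b)
  show ?case
  proof (rule gen_right[OF _ trel_addl(4)])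
    fix c d assume cd: "c \<in> carr R" "d \<in> carr R"
    let ?X = "E (mul R b c)"
    have X: "?X \<in> carr R" using trel_addl cd by simp
    have "tmul_raw R E (tgen (add R a a') b - tgen a b - tgen a' b) (tgen c d)
       = tgen (add R (mul R a ?X) (mul R a' ?X)) d - tgen (mul R a ?X) d - tgen (mul R a' ?X) d"
      using trel_addl X by (simp add: tmul_minus_left tmul_tgen distr)
    moreover have "\<dots> \<in> TR" using trel_addl X cd by (intro trel.trel_addl closed)
    ultimately show "tmul_raw R E (tgen (add R a a') b - tgen a b - tgen a' b) (tgen c d) \<in> TR" by simp
  qed
next
  case (trel_addr a b b')
  show ?case
  proof (rule gen_right[OF _ trel_addr(4)])
    fix c d assume cd: "c \<in> carr R" "d \<in> carr R"
    have X: "E (mul R b c) \<in> carr R" "E (mul R b' c) \<in> carr R" using trel_addr cd by simp_all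
    have "tmul_raw R E (tgen a (add R b b') - tgen a b - tgen a b') (tgen c d)
       = tgen (add R (mul R a (E (mul R b c))) (mul R a (E (mul R b' c)))) d
         - tgen (mul R a (E (mul R b c))) d - tgen (mul R a (E (mul R b' c))) d"
      using trel_addr X cd by (simp add: tmul_minus_left tmul_tgen distr distl E_add)
    moreover have "\<dots> \<in> TR" using trel_addr X cd by (intro trel.trel_addl closed)
    ultimately show "tmul_raw R E (tgen a (add R b b') - tgen a b - tgen a b') (tgen c d) \<in> TR" by simp
  qed
next
  case (trel_smull a b c0)
  show ?case
  proof (rule gen_right[OF _ trel_smull(3)])
    fix c d assume cd: "c \<in> carr R" "d \<in> carr R"
    have X: "E (mul R b c) \<in> carr R" using trel_smull cd by simp
    have "tmul_raw R E (tgen (smul R c0 a) b - tscale c0 (tgen a b)) (tgen c d)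
       = tgen (smul R c0 (mul R a (E (mul R b c)))) d - tscale c0 (tgen (mul R a (E (mul R b c))) d)"
      using trel_smull X cd by (simp add: tmul_minus_left tmul_tgen tmul_scale_left)
    moreover have "\<dots> \<in> TR" using trel_smull X cd by (intro trel.trel_smull closed)
    ultimately show "tmul_raw R E (tgen (smul R c0 a) b - tscale c0 (tgen a b)) (tgen c d) \<in> TR" by simp
  qed
next
  case (trel_smulr a b c0)
  show ?case
  proof (rule gen_right[OF _ trel_smulr(3)])
    fix c d assume cd: "c \<in> carr R" "d \<in> carr R"
    have X: "E (mul R b c) \<in> carr R" using trel_smulr cd by simp
    have "tmul_raw R E (tgen a (smul R c0 b) - tscale c0 (tgen a b)) (tgen c d)
       = tgen (smul R c0 (mul R a (E (mul R b c)))) d - tscale c0 (tgen (mul R a (E (mul R b c))) d)"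
      using trel_smulr X cd by (simp add: tmul_minus_left tmul_tgen tmul_scale_left E_smul)
    moreover have "\<dots> \<in> TR" using trel_smulr X cd by (intro trel.trel_smull closed)
    ultimately show "tmul_raw R E (tgen a (smul R c0 b) - tscale c0 (tgen a b)) (tgen c d) \<in> TR" by simp
  qed
next
  case (trel_bal a b s)
  show ?case
  proof (rule gen_right[OF _ trel_bal(4)])
    fix c d assume cd: "c \<in> carr R" "d \<in> carr R"
    have s: "s \<in> carr R" using trel_bal by simp
    have "mul R a (E (mul R (mul R s b) c)) = mul R (mul R a s) (E (mul R b c))"
      using trel_bal cd s by (simp add: mul_assoc E_left)
    then have "tmul_raw R E (tgen (mul R a s) b - tgen a (mul R s b)) (tgen c d) = 0"
      by (simp add: tmul_minus_left tmul_tgen)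
    then show "tmul_raw R E (tgen (mul R a s) b - tgen a (mul R s b)) (tgen c d) \<in> TR"
      by (simp add: trel.trel_zero)
  qed
qed

lemma tmul_trel_right: "x \<in> TR \<Longrightarrow> v \<in> TF \<Longrightarrow> tmul_raw R E v x \<in> TR"
proof (induction rule: trel.induct)
  case trel_zero then show ?case by (simp add: trel.trel_zero)
next
  case (trel_add u w') then show ?case by (simp add: tmul_add_right trel.trel_add)
next
  case (trel_scale u c) then show ?case by (simp add: tmul_scale_right trel.trel_scale)
next
  case (trel_addl c c' d)
  show ?case
  proof (rule gen_left[OF _ trel_addl(4)])
    fix a b assume ab: "a \<in> carr R" "b \<in> carr R"
    have X: "E (mul R b c) \<in> carr R" "E (mul R b c') \<in> carr R" using trel_addl ab by simp_all
    have "tmul_raw R E (tgen a b) (tgen (add R c c') d - tgen c d - tgen c' d)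
       = tgen (add R (mul R a (E (mul R b c))) (mul R a (E (mul R b c')))) d
         - tgen (mul R a (E (mul R b c))) d - tgen (mul R a (E (mul R b c'))) d"
      using trel_addl X ab by (simp add: tmul_minus_right tmul_tgen distl E_add)
    moreover have "\<dots> \<in> TR" using trel_addl X ab by (intro trel.trel_addl closed)
    ultimately show "tmul_raw R E (tgen a b) (tgen (add R c c') d - tgen c d - tgen c' d) \<in> TR" by simp
  qed
next
  case (trel_addr c d d')
  show ?case
  proof (rule gen_left[OF _ trel_addr(4)])
    fix a b assume ab: "a \<in> carr R" "b \<in> carr R"
    have X: "E (mul R b c) \<in> carr R" using trel_addr ab by simp
    have "tmul_raw R E (tgen a b) (tgen c (add R d d') - tgen c d - tgen c d')
       = tgen (mul R a (E (mul R b c))) (add R d d') - tgen (mul R a (E (mul R b c))) d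
         - tgen (mul R a (E (mul R b c))) d'"
      by (simp add: tmul_minus_right tmul_tgen)
    moreover have "\<dots> \<in> TR" using trel_addr X ab by (intro trel.trel_addr closed)
    ultimately show "tmul_raw R E (tgen a b) (tgen c (add R d d') - tgen c d - tgen c d') \<in> TR" by simp
  qed
next
  case (trel_smull c d g)
  show ?case
  proof (rule gen_left[OF _ trel_smull(3)])
    fix a b assume ab: "a \<in> carr R" "b \<in> carr R"
    have X: "E (mul R b c) \<in> carr R" using trel_smull ab by simp
    have "tmul_raw R E (tgen a b) (tgen (smul R g c) d - tscale g (tgen c d))
       = tgen (smul R g (mul R a (E (mul R b c)))) d - tscale g (tgen (mul R a (E (mul R b c))) d)"
      using trel_smull X ab by (simp add: tmul_minus_right tmul_tgen tmul_scale_right E_smul)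
    moreover have "\<dots> \<in> TR" using trel_smull X ab by (intro trel.trel_smull closed)
    ultimately show "tmul_raw R E (tgen a b) (tgen (smul R g c) d - tscale g (tgen c d)) \<in> TR" by simp
  qed
next
  case (trel_smulr c d g)
  show ?case
  proof (rule gen_left[OF _ trel_smulr(3)])
    fix a b assume ab: "a \<in> carr R" "b \<in> carr R"
    have X: "E (mul R b c) \<in> carr R" using trel_smulr ab by simp
    have "tmul_raw R E (tgen a b) (tgen c (smul R g d) - tscale g (tgen c d))
       = tgen (mul R a (E (mul R b c))) (smul R g d) - tscale g (tgen (mul R a (E (mul R b c))) d)"
      by (simp add: tmul_minus_right tmul_tgen tmul_scale_right)
    moreover have "\<dots> \<in> TR" using trel_smulr X ab by (intro trel.trel_smulr closed)
    ultimately show "tmul_raw R E (tgen a b) (tgen c (smul R g d) - tscale g (tgen c d)) \<in> TR" by simp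
  qed
next
  case (trel_bal c d s)
  show ?case
  proof (rule gen_left[OF _ trel_bal(4)])
    fix a b assume ab: "a \<in> carr R" "b \<in> carr R"
    have s: "s \<in> carr R" using trel_bal by simp
    have X: "E (mul R b c) \<in> carr R" using trel_bal ab by simp
    have "mul R a (E (mul R b (mul R c s))) = mul R (mul R a (E (mul R b c))) s"
      using trel_bal ab s by (simp add: mul_assoc[symmetric] E_right)
    then have "tmul_raw R E (tgen a b) (tgen (mul R c s) d - tgen c (mul R s d))
       = tgen (mul R (mul R a (E (mul R b c))) s) d - tgen (mul R a (E (mul R b c))) (mul R s d)"
      by (simp add: tmul_minus_right tmul_tgen)
    moreover have "\<dots> \<in> TR" using trel_bal X ab by (intro trel.trel_bal closed)
    ultimately show "tmul_raw R E (tgen a b) (tgen (mul R c s) d - tgen c (mul R s d)) \<in> TR" by simp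
  qed
qed

lemma tgen_zero_left: "b \<in> carr R \<Longrightarrow> tgen (zero R) b \<in> TR"
proof -
  assume b: "b \<in> carr R"
  have "tgen (add R (zero R) (zero R)) b - tgen (zero R) b - tgen (zero R) b \<in> TR"
    using b by (intro trel.trel_addl) simp_all
  then have "- tgen (zero R) b \<in> TR" by simp
  then have "- (- tgen (zero R) b) \<in> TR" by (rule trel_uminus)
  then show ?thesis by simp
qed

lemma tgen_zero_right: "a \<in> carr R \<Longrightarrow> tgen a (zero R) \<in> TR"
proof -
  assume a: "a \<in> carr R"
  have "tgen a (add R (zero R) (zero R)) - tgen a (zero R) - tgen a (zero R) \<in> TR"
    using a by (intro trel.trel_addr) simp_all
  then have "- tgen a (zero R) \<in> TR" by simp
  then have "- (- tgen a (zero R)) \<in> TR" by (rule trel_uminus)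
  then show ?thesis by simp
qed

lemma tgen_fsum_left:
  assumes "finite I" "\<forall>i\<in>I. f i \<in> carr R" "b \<in> carr R"
  shows "tgen (fsum R f I) b - (\<Sum>i\<in>I. tgen (f i) b) \<in> TR"
  using assms
proof (induction I rule: finite_induct)
  case empty then show ?case using tgen_zero_left by simp
next
  case (insert x F)
  have fs: "fsum R f F \<in> carr R" using insert by (intro fsum_closed) simp
  have "tgen (add R (f x) (fsum R f F)) b - tgen (f x) b - tgen (fsum R f F) b \<in> TR"
    using insert fs by (intro trel.trel_addl) simp_all
  moreover have "tgen (fsum R f F) b - (\<Sum>i\<in>F. tgen (f i) b) \<in> TR" using insert by simp
  ultimately have "(tgen (add R (f x) (fsum R f F)) b - tgen (f x) b - tgen (fsum R f F) b)
     + (tgen (fsum R f F) b - (\<Sum>i\<in>F. tgen (f i) b)) \<in> TR" by (rule trel.trel_add)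
  moreover have "fsum R f (insert x F) = add R (f x) (fsum R f F)"
    using insert by (intro fsum_insert) simp_all
  ultimately show ?case using insert(1,2) by (simp add: algebra_simps)
qed

lemma tgen_fsum_right:
  assumes "finite I" "\<forall>i\<in>I. f i \<in> carr R" "a \<in> carr R"
  shows "tgen a (fsum R f I) - (\<Sum>i\<in>I. tgen a (f i)) \<in> TR"
  using assms
proof (induction I rule: finite_induct)
  case empty then show ?case using tgen_zero_right by simp
next
  case (insert x F)
  have fs: "fsum R f F \<in> carr R" using insert by (intro fsum_closed) simp
  have "tgen a (add R (f x) (fsum R f F)) - tgen a (f x) - tgen a (fsum R f F) \<in> TR"
    using insert fs by (intro trel.trel_addr) simp_all
  moreover have "tgen a (fsum R f F) - (\<Sum>i\<in>F. tgen a (f i)) \<in> TR" using insert by simp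
  ultimately have "(tgen a (add R (f x) (fsum R f F)) - tgen a (f x) - tgen a (fsum R f F))
     + (tgen a (fsum R f F) - (\<Sum>i\<in>F. tgen a (f i))) \<in> TR" by (rule trel.trel_add)
  moreover have "fsum R f (insert x F) = add R (f x) (fsum R f F)"
    using insert by (intro fsum_insert) simp_all
  ultimately show ?case using insert(1,2) by (simp add: algebra_simps)
qed

end

definition hyp :: "('k::field, 'a) kalg \<Rightarrow> 'a set \<Rightarrow> ('a \<Rightarrow> 'a) \<Rightarrow> nat \<Rightarrow> (nat \<Rightarrow> 'a) \<Rightarrow> (nat \<Rightarrow> 'a) \<Rightarrow> 'k \<Rightarrow> bool" where
 "hyp R S E n r s lam \<longleftrightarrow> kalgebra R \<and> subalgebra R S \<and> bimodule_map R S E \<and> E (one R) = one R \<and>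
   (\<forall>i<n. r i \<in> carr R \<and> s i \<in> carr R) \<and>
   (\<forall>m\<in>carr R. fsum R (\<lambda>i. mul R (E (mul R m (r i))) (s i)) {..<n} = m) \<and>
   (\<forall>m\<in>carr R. fsum R (\<lambda>i. mul R (r i) (E (mul R (s i) m))) {..<n} = m) \<and>
   lam \<noteq> 0 \<and> fsum R (\<lambda>i. mul R (r i) (s i)) {..<n} = smul R (inverse lam) (one R)"

locale bc =
  fixes R :: "('k::field, 'a) kalg" and S :: "'a set" and E :: "'a \<Rightarrow> 'a"
    and n :: nat and r s :: "nat \<Rightarrow> 'a" and lam :: 'k
  assumes H: "hyp R S E n r s lam"

sublocale bc \<subseteq> bcq R S E
  using H unfolding hyp_def by (intro bcq.intro ka.intro bcq_axioms.intro) simp_all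

context bc
begin

lemma E_one[simp]: "E (one R) = one R" using H unfolding hyp_def by blast
lemma r_carr[simp, intro]: "i < n \<Longrightarrow> r i \<in> carr R" using H unfolding hyp_def by blast
lemma s_carr[simp, intro]: "i < n \<Longrightarrow> s i \<in> carr R" using H unfolding hyp_def by blast
lemma dual1: "m \<in> carr R \<Longrightarrow> fsum R (\<lambda>i. mul R (E (mul R m (r i))) (s i)) {..<n} = m"
  using H unfolding hyp_def by blast
lemma dual2: "m \<in> carr R \<Longrightarrow> fsum R (\<lambda>i. mul R (r i) (E (mul R (s i) m))) {..<n} = m"
  using H unfolding hyp_def by blast
lemma lam_nz: "lam \<noteq> 0" using H unfolding hyp_def by blast
lemma sum_rs: "fsum R (\<lambda>i. mul R (r i) (s i)) {..<n} = smul R (inverse lam) (one R)"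
  using H unfolding hyp_def by blast

abbreviation R1 where "R1 \<equiv> bc_alg R S E n r s"
abbreviation cls where "cls \<equiv> tclass R S"
abbreviation onev where "onev \<equiv> (\<Sum>i<n. tgen (r i) (s i))"

lemma onev_tfree[simp, intro]: "onev \<in> TF"
  by (intro tfree_sum tfree_tgen) simp_all

lemma R1_carr: "carr R1 = cls ` TF" unfolding bc_alg_def by simp
lemma R1_zero: "zero R1 = cls 0" unfolding bc_alg_def by simp
lemma R1_one: "one R1 = cls onev" unfolding bc_alg_def by simp

lemma cls_in[simp, intro]: "v \<in> TF \<Longrightarrow> cls v \<in> carr R1"
  unfolding R1_carr by (rule imageI)

lemma carr_R1E: "X \<in> carr R1 \<Longrightarrow> (\<And>v. v \<in> TF \<Longrightarrow> X = cls v \<Longrightarrow> P) \<Longrightarrow> P"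
  unfolding R1_carr by blast

lemma cls_eq_iff: "cls v = cls w \<longleftrightarrow> v - w \<in> TR" by (rule tclass_eq)

lemma cls_eqI: "v - w \<in> TR \<Longrightarrow> cls v = cls w" using tclass_eq by blast

lemma trep_eq: obtains t where "trep (cls v) = v + t" "t \<in> TR"
proof -
  have "trep (cls v) - v \<in> TR" by (rule trep_tclass)
  then show ?thesis using that[of "trep (cls v) - v"] by simp
qed

lemma R1_add: "add R1 (cls v) (cls w) = cls (v + w)"
proof -
  obtain t1 where t1: "trep (cls v) = v + t1" "t1 \<in> TR" by (rule trep_eq)
  obtain t2 where t2: "trep (cls w) = w + t2" "t2 \<in> TR" by (rule trep_eq)
  have "add R1 (cls v) (cls w) = cls (trep (cls v) + trep (cls w))" unfolding bc_alg_def by simp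
  also have "\<dots> = cls (v + w)"
    by (rule cls_eqI) (use t1 t2 trel.trel_add[OF t1(2) t2(2)] in \<open>simp add: algebra_simps\<close>)
  finally show ?thesis .
qed

lemma R1_smul: "smul R1 c (cls v) = cls (tscale c v)"
proof -
  obtain t1 where t1: "trep (cls v) = v + t1" "t1 \<in> TR" by (rule trep_eq)
  have "smul R1 c (cls v) = cls (tscale c (trep (cls v)))" unfolding bc_alg_def by simp
  also have "\<dots> = cls (tscale c v)"
    by (rule cls_eqI) (use t1 trel.trel_scale[OF t1(2), of c] in \<open>simp add: tscale_add\<close>)
  finally show ?thesis .
qed

lemma R1_mul: "v \<in> TF \<Longrightarrow> w \<in> TF \<Longrightarrow> mul R1 (cls v) (cls w) = cls (tmul_raw R E v w)"
proof -
  assume v: "v \<in> TF" and w: "w \<in> TF"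
  obtain t1 where t1: "trep (cls v) = v + t1" "t1 \<in> TR" by (rule trep_eq)
  obtain t2 where t2: "trep (cls w) = w + t2" "t2 \<in> TR" by (rule trep_eq)
  have x1: "tmul_raw R E t1 w \<in> TR" using t1 w by (intro tmul_trel_left)
  have x2: "tmul_raw R E v t2 \<in> TR" using t2 v by (intro tmul_trel_right)
  have x3: "tmul_raw R E t1 t2 \<in> TR" using t1 t2 trel_tfree by (intro tmul_trel_left) simp_all
  have "mul R1 (cls v) (cls w) = cls (tmul_raw R E (trep (cls v)) (trep (cls w)))" unfolding bc_alg_def by simp
  also have "tmul_raw R E (trep (cls v)) (trep (cls w)) =
      tmul_raw R E v w + (tmul_raw R E t1 w + tmul_raw R E v t2 + tmul_raw R E t1 t2)"
    unfolding t1 t2 by (simp add: tmul_add_left tmul_add_right algebra_simps)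
  also have "cls \<dots> = cls (tmul_raw R E v w)"
    by (rule cls_eqI) (simp add: x1 x2 x3 trel.trel_add)
  finally show ?thesis .
qed

lemma tmul_assoc_gen: "a \<in> carr R \<Longrightarrow> b \<in> carr R \<Longrightarrow> c \<in> carr R \<Longrightarrow> d \<in> carr R \<Longrightarrow> e \<in> carr R \<Longrightarrow> f \<in> carr R \<Longrightarrow>
  tmul_raw R E (tmul_raw R E (tgen a b) (tgen c d)) (tgen e f) = tmul_raw R E (tgen a b) (tmul_raw R E (tgen c d) (tgen e f))"
proof -
  assume c: "a \<in> carr R" "b \<in> carr R" "c \<in> carr R" "d \<in> carr R" "e \<in> carr R" "f \<in> carr R"
  have "mul R a (E (mul R b (mul R c (E (mul R d e))))) = mul R (mul R a (E (mul R b c))) (E (mul R d e))"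
    using c by (simp add: mul_assoc[symmetric] E_right)
  then show ?thesis by (simp add: tmul_tgen)
qed

lemma tmul_assoc: "v \<in> TF \<Longrightarrow> w \<in> TF \<Longrightarrow> u \<in> TF \<Longrightarrow>
   tmul_raw R E (tmul_raw R E v w) u = tmul_raw R E v (tmul_raw R E w u)"
proof -
  have step3: "\<And>c d e f. c \<in> carr R \<Longrightarrow> d \<in> carr R \<Longrightarrow> e \<in> carr R \<Longrightarrow> f \<in> carr R \<Longrightarrow> v \<in> TF \<Longrightarrow>
     tmul_raw R E (tmul_raw R E v (tgen c d)) (tgen e f) = tmul_raw R E v (tmul_raw R E (tgen c d) (tgen e f))" for v
    by (rule lin_eq_free[where F="\<lambda>v. tmul_raw R E (tmul_raw R E v (tgen _ _)) (tgen _ _)"])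
       (simp_all add: tmul_add_left tmul_scale_left tmul_assoc_gen)
  have step2: "\<And>e f. e \<in> carr R \<Longrightarrow> f \<in> carr R \<Longrightarrow> v \<in> TF \<Longrightarrow> w \<in> TF \<Longrightarrow>
     tmul_raw R E (tmul_raw R E v w) (tgen e f) = tmul_raw R E v (tmul_raw R E w (tgen e f))" for v w
    by (rule lin_eq_free[where F="\<lambda>w. tmul_raw R E (tmul_raw R E v w) (tgen _ _)"])
       (simp_all add: tmul_add_left tmul_scale_left tmul_add_right tmul_scale_right step3)
  show "v \<in> TF \<Longrightarrow> w \<in> TF \<Longrightarrow> u \<in> TF \<Longrightarrow>
     tmul_raw R E (tmul_raw R E v w) u = tmul_raw R E v (tmul_raw R E w u)"
    by (rule lin_eq_free[where F="\<lambda>u. tmul_raw R E (tmul_raw R E v w) u"])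
       (simp_all add: tmul_add_right tmul_scale_right step2)
qed

end

context bc
begin

lemma unit_left: "v \<in> TF \<Longrightarrow> tmul_raw R E onev v - v \<in> TR"
proof (rule lin_mod_apply[where F="tmul_raw R E onev" and G="\<lambda>v. v"])
  show "lin_mod (tmul_raw R E onev)" by (rule lin_mod_exact) (simp_all add: tmul_add_right tmul_scale_right)
  show "lin_mod (\<lambda>v. v)" by (rule lin_mod_exact) simp_all
next
  fix a b assume ab: "a \<in> carr R" "b \<in> carr R"
  have e: "tmul_raw R E onev (tgen a b) = (\<Sum>i<n. tgen (mul R (r i) (E (mul R (s i) a))) b)"
    by (simp add: tmul_sum_left tmul_tgen)
  have "tgen (fsum R (\<lambda>i. mul R (r i) (E (mul R (s i) a))) {..<n}) b
      - (\<Sum>i<n. tgen (mul R (r i) (E (mul R (s i) a))) b) \<in> TR"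
    using ab by (intro tgen_fsum_left) simp_all
  then have "tgen a b - (\<Sum>i<n. tgen (mul R (r i) (E (mul R (s i) a))) b) \<in> TR"
    using dual2[OF ab(1)] by simp
  then show "tmul_raw R E onev (tgen a b) - tgen a b \<in> TR" unfolding e by (rule trel_sym)
qed

lemma unit_right: "v \<in> TF \<Longrightarrow> tmul_raw R E v onev - v \<in> TR"
proof (rule lin_mod_apply[where F="\<lambda>v. tmul_raw R E v onev" and G="\<lambda>v. v"])
  show "lin_mod (\<lambda>v. tmul_raw R E v onev)" by (rule lin_mod_exact) (simp_all add: tmul_add_left tmul_scale_left)
  show "lin_mod (\<lambda>v. v)" by (rule lin_mod_exact) simp_all
next
  fix a b assume ab: "a \<in> carr R" "b \<in> carr R"
  let ?x = "\<lambda>i. E (mul R b (r i))"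
  have e: "tmul_raw R E (tgen a b) onev = (\<Sum>i<n. tgen (mul R a (?x i)) (s i))"
    by (simp add: tmul_sum_right tmul_tgen)
  have t1: "(\<Sum>i<n. tgen (mul R a (?x i)) (s i)) - (\<Sum>i<n. tgen a (mul R (?x i) (s i))) \<in> TR"
    unfolding sum_subtractf[symmetric] using ab by (intro trel_sum trel.trel_bal) simp_all
  have "tgen a (fsum R (\<lambda>i. mul R (?x i) (s i)) {..<n}) - (\<Sum>i<n. tgen a (mul R (?x i) (s i))) \<in> TR"
    using ab by (intro tgen_fsum_right) simp_all
  then have t2: "tgen a b - (\<Sum>i<n. tgen a (mul R (?x i) (s i))) \<in> TR"
    using dual1[OF ab(2)] by simp
  have "(\<Sum>i<n. tgen (mul R a (?x i)) (s i)) - tgen a b \<in> TR"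
    using trel_trans[OF t1 trel_sym[OF t2]] .
  then show "tmul_raw R E (tgen a b) onev - tgen a b \<in> TR" unfolding e .
qed

lemma K1: "zero R1 \<in> carr R1" unfolding R1_zero by simp
lemma K2: "one R1 \<in> carr R1" unfolding R1_one by simp
lemma K3: "\<forall>x\<in>carr R1. \<forall>y\<in>carr R1. add R1 x y \<in> carr R1 \<and> mul R1 x y \<in> carr R1"
  by (auto elim!: carr_R1E simp: R1_add R1_mul tfree_add tmul_tfree)
lemma K4: "\<forall>c. \<forall>x\<in>carr R1. smul R1 c x \<in> carr R1"
  by (auto elim!: carr_R1E simp: R1_smul tfree_tscale)
lemma K5: "\<forall>x\<in>carr R1. \<forall>y\<in>carr R1. \<forall>z\<in>carr R1.
        add R1 (add R1 x y) z = add R1 x (add R1 y z) \<and>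
        mul R1 (mul R1 x y) z = mul R1 x (mul R1 y z) \<and>
        mul R1 x (add R1 y z) = add R1 (mul R1 x y) (mul R1 x z) \<and>
        mul R1 (add R1 x y) z = add R1 (mul R1 x z) (mul R1 y z)"
proof (intro ballI)
  fix x y z assume "x \<in> carr R1" "y \<in> carr R1" "z \<in> carr R1"
  then obtain v w u where vwu: "v \<in> TF" "w \<in> TF" "u \<in> TF" "x = cls v" "y = cls w" "z = cls u"
    by (metis carr_R1E)
  show "add R1 (add R1 x y) z = add R1 x (add R1 y z) \<and>
        mul R1 (mul R1 x y) z = mul R1 x (mul R1 y z) \<and>
        mul R1 x (add R1 y z) = add R1 (mul R1 x y) (mul R1 x z) \<and>
        mul R1 (add R1 x y) z = add R1 (mul R1 x z) (mul R1 y z)"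
    unfolding vwu(4-6) using vwu(1-3)
    by (simp add: R1_add R1_mul tfree_add tmul_tfree tmul_assoc tmul_add_left tmul_add_right add.assoc)
qed
lemma K6: "\<forall>x\<in>carr R1. \<forall>y\<in>carr R1. add R1 x y = add R1 y x"
  by (auto elim!: carr_R1E simp: R1_add add.commute)
lemma K7: "\<forall>x\<in>carr R1. add R1 x (zero R1) = x \<and> add R1 x (smul R1 (-1) x) = zero R1 \<and>
        mul R1 (one R1) x = x \<and> mul R1 x (one R1) = x \<and> smul R1 1 x = x"
proof (intro ballI)
  fix x assume "x \<in> carr R1"
  then obtain v where v: "v \<in> TF" "x = cls v" by (metis carr_R1E)
  have u1: "mul R1 (one R1) x = x" unfolding v(2) R1_one using v(1)
    by (simp add: R1_mul cls_eq_iff unit_left)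
  have u2: "mul R1 x (one R1) = x" unfolding v(2) R1_one using v(1)
    by (simp add: R1_mul cls_eq_iff unit_right)
  show "add R1 x (zero R1) = x \<and> add R1 x (smul R1 (-1) x) = zero R1 \<and>
        mul R1 (one R1) x = x \<and> mul R1 x (one R1) = x \<and> smul R1 1 x = x"
    using u1 u2 unfolding v(2) R1_zero by (simp add: R1_add R1_smul tscale_neg1)
qed
lemma K8: "\<forall>a b. \<forall>x\<in>carr R1. smul R1 (a * b) x = smul R1 a (smul R1 b x) \<and>
        smul R1 (a + b) x = add R1 (smul R1 a x) (smul R1 b x)"
  by (auto elim!: carr_R1E simp: R1_smul R1_add tscale_add_scalar)
lemma K9: "\<forall>a. \<forall>x\<in>carr R1. \<forall>y\<in>carr R1. smul R1 a (add R1 x y) = add R1 (smul R1 a x) (smul R1 a y) \<and>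
        smul R1 a (mul R1 x y) = mul R1 (smul R1 a x) y \<and>
        smul R1 a (mul R1 x y) = mul R1 x (smul R1 a y)"
  by (auto elim!: carr_R1E simp: R1_smul R1_add R1_mul tscale_add tmul_scale_left tmul_scale_right tfree_tscale)

lemma R1_kalgebra: "kalgebra R1"
  unfolding kalgebra_def by (intro conjI K1 K2 K3 K4 K5 K6 K7 K8 K9)

end

context bc
begin

sublocale R1: ka R1 by (unfold_locales) (rule R1_kalgebra)

abbreviation gen where "gen a b \<equiv> cls (tgen a b)"
abbreviation emb where "emb \<equiv> bc_emb R S n r s"
abbreviation E1 where "E1 \<equiv> bc_E R lam"

lemma gen_carr[simp, intro]: "a \<in> carr R \<Longrightarrow> b \<in> carr R \<Longrightarrow> gen a b \<in> carr R1"
  by (intro cls_in tfree_tgen)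

lemma cls_sum: "(\<And>i. i \<in> I \<Longrightarrow> f i \<in> TF) \<Longrightarrow> cls (sum f I) = fsum R1 (\<lambda>i. cls (f i)) I"
proof (induction I rule: infinite_finite_induct)
  case (infinite A) then show ?case by (simp add: R1_zero)
next
  case empty then show ?case by (simp add: R1_zero)
next
  case (insert x F)
  have "cls (sum f (insert x F)) = cls (f x + sum f F)" using insert by simp
  also have "\<dots> = add R1 (cls (f x)) (cls (sum f F))" by (simp add: R1_add)
  also have "\<dots> = add R1 (cls (f x)) (fsum R1 (\<lambda>i. cls (f i)) F)" using insert by simp
  also have "\<dots> = fsum R1 (\<lambda>i. cls (f i)) (insert x F)"
    using insert by (intro R1.fsum_insert[symmetric]) auto
  finally show ?case .
qed

lemma R1_induct[consumes 1, case_names zero gen add smul]: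
  assumes X: "X \<in> carr R1"
    and z: "P (zero R1)"
    and g: "\<And>a b. a \<in> carr R \<Longrightarrow> b \<in> carr R \<Longrightarrow> P (gen a b)"
    and a: "\<And>X Y. X \<in> carr R1 \<Longrightarrow> Y \<in> carr R1 \<Longrightarrow> P X \<Longrightarrow> P Y \<Longrightarrow> P (add R1 X Y)"
    and sm: "\<And>c X. X \<in> carr R1 \<Longrightarrow> P X \<Longrightarrow> P (smul R1 c X)"
  shows "P X"
proof -
  obtain v where v: "v \<in> TF" "X = cls v" using X by (rule carr_R1E)
  have main: "\<And>K. finite K \<Longrightarrow> K \<subseteq> carr R \<times> carr R \<Longrightarrow>
      P (cls (\<Sum>p\<in>K. tscale (c p) (tgen (fst p) (snd p))))" for c
  proof -
    fix K :: "('a \<times> 'a) set"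
    assume "finite K" "K \<subseteq> carr R \<times> carr R"
    then show "P (cls (\<Sum>p\<in>K. tscale (c p) (tgen (fst p) (snd p))))"
    proof (induction K rule: finite_induct)
      case empty then show ?case using z by (simp add: R1_zero)
    next
      case (insert x K)
      let ?t = "tscale (c x) (tgen (fst x) (snd x))"
      let ?s = "\<Sum>p\<in>K. tscale (c p) (tgen (fst p) (snd p))"
      have xc: "fst x \<in> carr R" "snd x \<in> carr R" using insert(4) by (auto simp: mem_Times_iff)
      have sF: "?s \<in> TF" using insert(4) by (intro tfree_sum tfree_tscale tfree_tgen) (auto simp: mem_Times_iff)
      have "P (cls ?t)" unfolding R1_smul[symmetric] using xc by (intro sm g gen_carr)
      moreover have "P (cls ?s)" using insert by simp
      ultimately have "P (add R1 (cls ?t) (cls ?s))" using xc sF by (intro a) (simp_all add: tfree_tscale tfree_tgen)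
      then show ?case using insert(1,2) by (simp add: R1_add)
    qed
  qed
  have "X = cls (\<Sum>p\<in>Poly_Mapping.keys v. tscale (Poly_Mapping.lookup v p) (tgen (fst p) (snd p)))"
    using v free_expand[of v] by simp
  also have "P \<dots>" using v by (intro main) (auto simp: tfree_iff)
  finally show ?thesis .
qed

lemma gen_mul: "a \<in> carr R \<Longrightarrow> b \<in> carr R \<Longrightarrow> c \<in> carr R \<Longrightarrow> d \<in> carr R \<Longrightarrow>
  mul R1 (gen a b) (gen c d) = gen (mul R a (E (mul R b c))) d"
  by (simp add: R1_mul tfree_tgen tmul_tgen)

lemma gen_addl: "a \<in> carr R \<Longrightarrow> a' \<in> carr R \<Longrightarrow> b \<in> carr R \<Longrightarrow>
  gen (add R a a') b = add R1 (gen a b) (gen a' b)"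
  unfolding R1_add by (rule cls_eqI) (use trel.trel_addl[of a R a' b S] in \<open>simp add: algebra_simps\<close>)

lemma gen_addr: "a \<in> carr R \<Longrightarrow> b \<in> carr R \<Longrightarrow> b' \<in> carr R \<Longrightarrow>
  gen a (add R b b') = add R1 (gen a b) (gen a b')"
  unfolding R1_add by (rule cls_eqI) (use trel.trel_addr[of a R b b' S] in \<open>simp add: algebra_simps\<close>)

lemma gen_smull: "a \<in> carr R \<Longrightarrow> b \<in> carr R \<Longrightarrow> gen (smul R c a) b = smul R1 c (gen a b)"
  unfolding R1_smul by (rule cls_eqI) (rule trel.trel_smull)

lemma gen_smulr: "a \<in> carr R \<Longrightarrow> b \<in> carr R \<Longrightarrow> gen a (smul R c b) = smul R1 c (gen a b)"
  unfolding R1_smul by (rule cls_eqI) (rule trel.trel_smulr)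

lemma gen_bal: "a \<in> carr R \<Longrightarrow> b \<in> carr R \<Longrightarrow> x \<in> S \<Longrightarrow> gen (mul R a x) b = gen a (mul R x b)"
  by (rule cls_eqI) (rule trel.trel_bal)

lemma gen_fsum_left: "finite I \<Longrightarrow> \<forall>i\<in>I. f i \<in> carr R \<Longrightarrow> b \<in> carr R \<Longrightarrow>
  gen (fsum R f I) b = fsum R1 (\<lambda>i. gen (f i) b) I"
proof -
  assume a: "finite I" "\<forall>i\<in>I. f i \<in> carr R" "b \<in> carr R"
  have "gen (fsum R f I) b = cls (\<Sum>i\<in>I. tgen (f i) b)"
    by (rule cls_eqI) (rule tgen_fsum_left[OF a])
  also have "\<dots> = fsum R1 (\<lambda>i. gen (f i) b) I" using a by (intro cls_sum tfree_tgen) simp_all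
  finally show ?thesis .
qed

lemma gen_fsum_right: "finite I \<Longrightarrow> \<forall>i\<in>I. f i \<in> carr R \<Longrightarrow> a \<in> carr R \<Longrightarrow>
  gen a (fsum R f I) = fsum R1 (\<lambda>i. gen a (f i)) I"
proof -
  assume a: "finite I" "\<forall>i\<in>I. f i \<in> carr R" "a \<in> carr R"
  have "gen a (fsum R f I) = cls (\<Sum>i\<in>I. tgen a (f i))"
    by (rule cls_eqI) (rule tgen_fsum_right[OF a])
  also have "\<dots> = fsum R1 (\<lambda>i. gen a (f i)) I" using a by (intro cls_sum tfree_tgen) simp_all
  finally show ?thesis .
qed

lemma one_R1_gen: "one R1 = fsum R1 (\<lambda>i. gen (r i) (s i)) {..<n}"
  unfolding R1_one by (rule cls_sum) (simp add: tfree_tgen)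

lemma emb_def': "x \<in> carr R \<Longrightarrow> emb x = fsum R1 (\<lambda>i. gen (mul R x (r i)) (s i)) {..<n}"
  unfolding bc_emb_def by (rule cls_sum) (simp add: tfree_tgen)

lemma emb_carr[simp, intro]: "x \<in> carr R \<Longrightarrow> emb x \<in> carr R1"
  by (subst emb_def') (simp_all add: R1.fsum_closed)

lemma mul_emb_gen: "x \<in> carr R \<Longrightarrow> a \<in> carr R \<Longrightarrow> b \<in> carr R \<Longrightarrow> mul R1 (emb x) (gen a b) = gen (mul R x a) b"
proof -
  assume c: "x \<in> carr R" "a \<in> carr R" "b \<in> carr R"
  have "mul R1 (emb x) (gen a b) = fsum R1 (\<lambda>i. mul R1 (gen (mul R x (r i)) (s i)) (gen a b)) {..<n}"
    unfolding emb_def'[OF c(1)] using c by (intro R1.fsum_mul_right[symmetric]) simp_all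
  also have "\<dots> = fsum R1 (\<lambda>i. gen (mul R x (mul R (r i) (E (mul R (s i) a)))) b) {..<n}"
    using c by (intro R1.fsum_cong) (simp add: gen_mul mul_assoc)
  also have "\<dots> = gen (fsum R (\<lambda>i. mul R x (mul R (r i) (E (mul R (s i) a)))) {..<n}) b"
    using c by (intro gen_fsum_left[symmetric]) simp_all
  also have "fsum R (\<lambda>i. mul R x (mul R (r i) (E (mul R (s i) a)))) {..<n} = mul R x a"
    using c by (simp add: fsum_mul_left dual2)
  finally show ?thesis .
qed

lemma mul_gen_emb: "x \<in> carr R \<Longrightarrow> a \<in> carr R \<Longrightarrow> b \<in> carr R \<Longrightarrow> mul R1 (gen a b) (emb x) = gen a (mul R b x)"
proof -
  assume c: "x \<in> carr R" "a \<in> carr R" "b \<in> carr R"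
  have "mul R1 (gen a b) (emb x) = fsum R1 (\<lambda>i. mul R1 (gen a b) (gen (mul R x (r i)) (s i))) {..<n}"
    unfolding emb_def'[OF c(1)] using c by (intro R1.fsum_mul_left[symmetric]) simp_all
  also have "\<dots> = fsum R1 (\<lambda>i. gen a (mul R (E (mul R (mul R b x) (r i))) (s i))) {..<n}"
    using c by (intro R1.fsum_cong) (simp add: gen_mul mul_assoc gen_bal)
  also have "\<dots> = gen a (fsum R (\<lambda>i. mul R (E (mul R (mul R b x) (r i))) (s i)) {..<n})"
    using c by (intro gen_fsum_right[symmetric]) simp_all
  also have "fsum R (\<lambda>i. mul R (E (mul R (mul R b x) (r i))) (s i)) {..<n} = mul R b x"
    using c by (simp add: dual1)
  finally show ?thesis .
qed

end

definition lext :: "('k::field, 'a) kalg \<Rightarrow> ('a \<times> 'a \<Rightarrow> 'a) \<Rightarrow> ('k, 'a) free2 \<Rightarrow> 'a" where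
  "lext R g v = fsum R (\<lambda>p. smul R (Poly_Mapping.lookup v p) (g p)) (Poly_Mapping.keys v)"

context ka
begin

lemma sub3_zero: "y \<in> carr A \<Longrightarrow> z \<in> carr A \<Longrightarrow> sub (sub (add A y z) y) z = zero A"
proof -
  assume yz: "y \<in> carr A" "z \<in> carr A"
  have "sub (add A y z) y = add A (add A y z) (smul A (-1) y)" unfolding sub_def ..
  also have "\<dots> = add A z (add A y (smul A (-1) y))" using yz
    by (simp add: add_assoc add_left_comm)
  also have "\<dots> = z" using yz add_neg by simp
  finally show ?thesis using yz by simp
qed

end

context bcq
begin

lemma lext_gen:
  assumes gc: "\<And>a b. a \<in> carr R \<Longrightarrow> b \<in> carr R \<Longrightarrow> g (a, b) \<in> carr R"
    and P: "finite P" "Poly_Mapping.keys v \<subseteq> P" "P \<subseteq> carr R \<times> carr R"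
  shows "lext R g v = fsum R (\<lambda>p. smul R (Poly_Mapping.lookup v p) (g p)) P"
  unfolding lext_def
proof (rule fsum_mono_neutral[symmetric])
  show "finite P" "Poly_Mapping.keys v \<subseteq> P" by (fact P)+
  show "\<forall>i\<in>P. smul R (Poly_Mapping.lookup v i) (g i) \<in> carr R"
  proof
    fix i assume "i \<in> P"
    then have "fst i \<in> carr R" "snd i \<in> carr R" using P(3) by (auto simp: mem_Times_iff)
    then have "g i \<in> carr R" using gc[of "fst i" "snd i"] by simp
    then show "smul R (Poly_Mapping.lookup v i) (g i) \<in> carr R" by simp
  qed
  show "\<forall>i\<in>P - Poly_Mapping.keys v. smul R (Poly_Mapping.lookup v i) (g i) = zero R"
  proof
    fix i assume i: "i \<in> P - Poly_Mapping.keys v"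
    then have "fst i \<in> carr R" "snd i \<in> carr R" using P(3) by (auto simp: mem_Times_iff)
    then have "g i \<in> carr R" using gc[of "fst i" "snd i"] by simp
    moreover have "Poly_Mapping.lookup v i = 0" using i by (simp add: in_keys_iff)
    ultimately show "smul R (Poly_Mapping.lookup v i) (g i) = zero R" by simp
  qed
qed

lemma g_carr_P:
  assumes gc: "\<And>a b. a \<in> carr R \<Longrightarrow> b \<in> carr R \<Longrightarrow> g (a, b) \<in> carr R"
  shows "P \<subseteq> carr R \<times> carr R \<Longrightarrow> \<forall>p\<in>P. g p \<in> carr R"
proof
  fix p assume "P \<subseteq> carr R \<times> carr R" "p \<in> P"
  then have "fst p \<in> carr R" "snd p \<in> carr R" by (auto simp: mem_Times_iff)
  then show "g p \<in> carr R" using gc[of "fst p" "snd p"] by simp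
qed

lemma lext_closed:
  assumes gc: "\<And>a b. a \<in> carr R \<Longrightarrow> b \<in> carr R \<Longrightarrow> g (a, b) \<in> carr R"
  shows "v \<in> TF \<Longrightarrow> lext R g v \<in> carr R"
  unfolding lext_def using g_carr_P[where g=g, OF gc, of "Poly_Mapping.keys v"]
  by (intro fsum_closed) (simp add: tfree_iff)

lemma lext_add:
  assumes gc: "\<And>a b. a \<in> carr R \<Longrightarrow> b \<in> carr R \<Longrightarrow> g (a, b) \<in> carr R"
    and vw: "v \<in> TF" "w \<in> TF"
  shows "lext R g (v + w) = add R (lext R g v) (lext R g w)"
proof -
  let ?P = "Poly_Mapping.keys v \<union> Poly_Mapping.keys w"
  have P: "finite ?P" "?P \<subseteq> carr R \<times> carr R" using vw by (auto simp: tfree_iff)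
  have gP: "\<forall>p\<in>?P. g p \<in> carr R" using g_carr_P[where g=g, OF gc P(2)] .
  have "lext R g (v + w) = fsum R (\<lambda>p. smul R (Poly_Mapping.lookup (v + w) p) (g p)) ?P"
    using P keys_add[of v w] by (intro lext_gen[where g=g, OF gc]) simp_all
  also have "\<dots> = fsum R (\<lambda>p. add R (smul R (Poly_Mapping.lookup v p) (g p)) (smul R (Poly_Mapping.lookup w p) (g p))) ?P"
    using gP by (intro fsum_cong) (simp add: lookup_add smul_add_scalar)
  also have "\<dots> = add R (fsum R (\<lambda>p. smul R (Poly_Mapping.lookup v p) (g p)) ?P) (fsum R (\<lambda>p. smul R (Poly_Mapping.lookup w p) (g p)) ?P)"
    using gP by (intro fsum_add) simp_all
  also have "fsum R (\<lambda>p. smul R (Poly_Mapping.lookup v p) (g p)) ?P = lext R g v"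
    using P by (intro lext_gen[where g=g, OF gc, symmetric]) auto
  also have "fsum R (\<lambda>p. smul R (Poly_Mapping.lookup w p) (g p)) ?P = lext R g w"
    using P by (intro lext_gen[where g=g, OF gc, symmetric]) auto
  finally show ?thesis .
qed

lemma lext_scale:
  assumes gc: "\<And>a b. a \<in> carr R \<Longrightarrow> b \<in> carr R \<Longrightarrow> g (a, b) \<in> carr R"
    and v: "v \<in> TF"
  shows "lext R g (tscale c v) = smul R c (lext R g v)"
proof -
  let ?P = "Poly_Mapping.keys v"
  have P: "finite ?P" "?P \<subseteq> carr R \<times> carr R" using v by (auto simp: tfree_iff)
  have gP: "\<forall>p\<in>?P. g p \<in> carr R" using g_carr_P[where g=g, OF gc P(2)] .
  have "lext R g (tscale c v) = fsum R (\<lambda>p. smul R (Poly_Mapping.lookup (tscale c v) p) (g p)) ?P"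
    using P keys_tscale[of c v] by (intro lext_gen[where g=g, OF gc]) simp_all
  also have "\<dots> = fsum R (\<lambda>p. smul R c (smul R (Poly_Mapping.lookup v p) (g p))) ?P"
    using gP by (intro fsum_cong) simp
  also have "\<dots> = smul R c (lext R g v)"
    unfolding lext_def using gP by (intro fsum_smul) simp
  finally show ?thesis .
qed

lemma lext_tgen:
  assumes gc: "\<And>a b. a \<in> carr R \<Longrightarrow> b \<in> carr R \<Longrightarrow> g (a, b) \<in> carr R"
    and ab: "a \<in> carr R" "b \<in> carr R"
  shows "lext R g (tgen a b) = g (a, b)"
  unfolding lext_def using gc[OF ab] by (simp add: lookup_tgen)

lemma lext_zero[simp]: "lext R g 0 = zero R"
  unfolding lext_def by simp

lemma lext_minus:
  assumes gc: "\<And>a b. a \<in> carr R \<Longrightarrow> b \<in> carr R \<Longrightarrow> g (a, b) \<in> carr R"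
    and vw: "v \<in> TF" "w \<in> TF"
  shows "lext R g (v - w) = sub (lext R g v) (lext R g w)"
proof -
  have e: "v - w = v + tscale (-1) w" by (simp add: tscale_neg1)
  have "lext R g (v + tscale (-1) w) = add R (lext R g v) (smul R (-1) (lext R g w))"
    using vw by (simp add: lext_add[where g=g, OF gc] lext_scale[where g=g, OF gc] tfree_tscale)
  then show ?thesis unfolding sub_def e .
qed

lemma lext_trel:
  assumes gc: "\<And>a b. a \<in> carr R \<Longrightarrow> b \<in> carr R \<Longrightarrow> g (a, b) \<in> carr R"
    and C1: "\<And>a a' b. a \<in> carr R \<Longrightarrow> a' \<in> carr R \<Longrightarrow> b \<in> carr R \<Longrightarrow> g (add R a a', b) = add R (g (a, b)) (g (a', b))"
    and C2: "\<And>a b b'. a \<in> carr R \<Longrightarrow> b \<in> carr R \<Longrightarrow> b' \<in> carr R \<Longrightarrow> g (a, add R b b') = add R (g (a, b)) (g (a, b'))"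
    and C3: "\<And>c a b. a \<in> carr R \<Longrightarrow> b \<in> carr R \<Longrightarrow> g (smul R c a, b) = smul R c (g (a, b))"
    and C4: "\<And>c a b. a \<in> carr R \<Longrightarrow> b \<in> carr R \<Longrightarrow> g (a, smul R c b) = smul R c (g (a, b))"
    and C5: "\<And>a b x. a \<in> carr R \<Longrightarrow> b \<in> carr R \<Longrightarrow> x \<in> S \<Longrightarrow> g (mul R a x, b) = g (a, mul R x b)"
  shows "t \<in> TR \<Longrightarrow> lext R g t = zero R"
proof (induction rule: trel.induct)
  case trel_zero then show ?case by simp
next
  case (trel_add v w)
  then show ?case using trel_tfree by (simp add: lext_add[where g=g, OF gc])
next
  case (trel_scale v c)
  then show ?case using trel_tfree by (simp add: lext_scale[where g=g, OF gc])
next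
  case (trel_addl a a' b)
  then show ?case
    by (simp add: lext_minus[where g=g, OF gc] tfree_minus tfree_tgen lext_tgen[where g=g, OF gc] C1 sub3_zero gc)
next
  case (trel_addr a b b')
  then show ?case
    by (simp add: lext_minus[where g=g, OF gc] tfree_minus tfree_tgen lext_tgen[where g=g, OF gc] C2 sub3_zero gc)
next
  case (trel_smull a b c)
  then show ?case
    by (simp add: lext_minus[where g=g, OF gc] tfree_tscale tfree_tgen lext_tgen[where g=g, OF gc] lext_scale[where g=g, OF gc] C3 gc)
next
  case (trel_smulr a b c)
  then show ?case
    by (simp add: lext_minus[where g=g, OF gc] tfree_tscale tfree_tgen lext_tgen[where g=g, OF gc] lext_scale[where g=g, OF gc] C4 gc)
next
  case (trel_bal a b x)
  then show ?case
    by (simp add: lext_minus[where g=g, OF gc] tfree_tgen lext_tgen[where g=g, OF gc] C5 gc)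
qed

definition mulg where "mulg p = mul R (fst p) (snd p)"
definition psig where "psig p = mul R (fst p) (E (snd p))"

lemma mulg_carr: "a \<in> carr R \<Longrightarrow> b \<in> carr R \<Longrightarrow> mulg (a, b) \<in> carr R" unfolding mulg_def by simp
lemma psig_carr: "a \<in> carr R \<Longrightarrow> b \<in> carr R \<Longrightarrow> psig (a, b) \<in> carr R" unfolding psig_def by simp

lemma mulg_trel: "t \<in> TR \<Longrightarrow> lext R mulg t = zero R"
  by (rule lext_trel[where g=mulg, OF mulg_carr]) (simp_all add: mulg_def distr distl mul_assoc)

lemma psig_trel: "t \<in> TR \<Longrightarrow> lext R psig t = zero R"
  by (rule lext_trel[where g=psig, OF psig_carr]) (simp_all add: psig_def distr distl mul_assoc E_add E_smul E_left)

end

context bc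
begin

definition Psi where "Psi X = lext R psig (trep X)"

lemma lext_trep:
  assumes gc: "\<And>a b. a \<in> carr R \<Longrightarrow> b \<in> carr R \<Longrightarrow> g (a, b) \<in> carr R"
    and gt: "\<And>t. t \<in> TR \<Longrightarrow> lext R g t = zero R"
    and v: "v \<in> TF"
  shows "lext R g (trep (cls v)) = lext R g v"
proof -
  obtain t where t: "trep (cls v) = v + t" "t \<in> TR" by (rule trep_eq)
  then have "lext R g (trep (cls v)) = add R (lext R g v) (lext R g t)"
    using v trel_tfree by (simp add: lext_add[where g=g, OF gc])
  then show ?thesis using gt[OF t(2)] lext_closed[where g=g, OF gc v] by simp
qed

lemma E1_cls: "v \<in> TF \<Longrightarrow> E1 (cls v) = smul R lam (lext R mulg v)"
proof -
  assume v: "v \<in> TF"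
  have "E1 (cls v) = smul R lam (lext R mulg (trep (cls v)))"
    unfolding bc_E_def lext_def mulg_def by simp
  then show ?thesis using lext_trep[where g=mulg, OF mulg_carr mulg_trel v] by simp
qed

lemma Psi_cls: "v \<in> TF \<Longrightarrow> Psi (cls v) = lext R psig v"
  unfolding Psi_def by (rule lext_trep[where g=psig, OF psig_carr psig_trel])

lemma E1_closed[simp, intro]: "X \<in> carr R1 \<Longrightarrow> E1 X \<in> carr R"
  by (erule carr_R1E) (simp add: E1_cls lext_closed[where g=mulg, OF mulg_carr])

lemma Psi_closed[simp, intro]: "X \<in> carr R1 \<Longrightarrow> Psi X \<in> carr R"
  by (erule carr_R1E) (simp add: Psi_cls lext_closed[where g=psig, OF psig_carr])

lemma E1_add: "X \<in> carr R1 \<Longrightarrow> Y \<in> carr R1 \<Longrightarrow> E1 (add R1 X Y) = add R (E1 X) (E1 Y)"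
  by (erule carr_R1E, erule carr_R1E)
     (simp add: R1_add E1_cls lext_add[where g=mulg, OF mulg_carr] smul_add
       lext_closed[where g=mulg, OF mulg_carr] tfree_add)

lemma Psi_add: "X \<in> carr R1 \<Longrightarrow> Y \<in> carr R1 \<Longrightarrow> Psi (add R1 X Y) = add R (Psi X) (Psi Y)"
  by (erule carr_R1E, erule carr_R1E)
     (simp add: R1_add Psi_cls lext_add[where g=psig, OF psig_carr] tfree_add)

lemma E1_smul: "X \<in> carr R1 \<Longrightarrow> E1 (smul R1 c X) = smul R c (E1 X)"
  by (erule carr_R1E)
     (simp add: R1_smul E1_cls lext_scale[where g=mulg, OF mulg_carr]
       lext_closed[where g=mulg, OF mulg_carr] tfree_tscale mult.commute)

lemma Psi_smul: "X \<in> carr R1 \<Longrightarrow> Psi (smul R1 c X) = smul R c (Psi X)"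
  by (erule carr_R1E) (simp add: R1_smul Psi_cls lext_scale[where g=psig, OF psig_carr] tfree_tscale)

lemma E1_zero[simp]: "E1 (zero R1) = zero R"
  by (simp add: R1_zero E1_cls)

lemma Psi_zero[simp]: "Psi (zero R1) = zero R"
  by (simp add: R1_zero Psi_cls)

lemma E1_gen: "a \<in> carr R \<Longrightarrow> b \<in> carr R \<Longrightarrow> E1 (gen a b) = smul R lam (mul R a b)"
  by (simp add: E1_cls tfree_tgen lext_tgen[where g=mulg, OF mulg_carr] mulg_def)

lemma Psi_gen: "a \<in> carr R \<Longrightarrow> b \<in> carr R \<Longrightarrow> Psi (gen a b) = mul R a (E b)"
  by (simp add: Psi_cls tfree_tgen lext_tgen[where g=psig, OF psig_carr] psig_def)

lemma E1_fsum: "\<forall>i\<in>I. f i \<in> carr R1 \<Longrightarrow> E1 (fsum R1 f I) = fsum R (\<lambda>i. E1 (f i)) I"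
  by (rule fsum_hom) (simp_all add: R1.ka_axioms ka_axioms E1_add)

lemma E1_one[simp]: "E1 (one R1) = one R"
proof -
  have "E1 (one R1) = fsum R (\<lambda>i. E1 (gen (r i) (s i))) {..<n}"
    unfolding one_R1_gen by (rule E1_fsum) simp
  also have "\<dots> = fsum R (\<lambda>i. smul R lam (mul R (r i) (s i))) {..<n}"
    by (intro fsum_cong) (simp add: E1_gen)
  also have "\<dots> = smul R lam (fsum R (\<lambda>i. mul R (r i) (s i)) {..<n})"
    by (intro fsum_smul) simp
  also have "\<dots> = one R" using lam_nz by (simp add: sum_rs)
  finally show ?thesis .
qed

lemma emb_mul: "x \<in> carr R \<Longrightarrow> y \<in> carr R \<Longrightarrow> emb (mul R x y) = mul R1 (emb x) (emb y)"
proof -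
  assume xy: "x \<in> carr R" "y \<in> carr R"
  have "mul R1 (emb x) (emb y) = fsum R1 (\<lambda>i. mul R1 (emb x) (gen (mul R y (r i)) (s i))) {..<n}"
    unfolding emb_def'[OF xy(2)] using xy by (intro R1.fsum_mul_left[symmetric]) simp_all
  also have "\<dots> = fsum R1 (\<lambda>i. gen (mul R (mul R x y) (r i)) (s i)) {..<n}"
    using xy by (intro R1.fsum_cong) (simp add: mul_emb_gen mul_assoc)
  also have "\<dots> = emb (mul R x y)" using xy by (simp add: emb_def')
  finally show ?thesis by simp
qed

lemma emb_add: "x \<in> carr R \<Longrightarrow> y \<in> carr R \<Longrightarrow> emb (add R x y) = add R1 (emb x) (emb y)"
proof -
  assume xy: "x \<in> carr R" "y \<in> carr R"
  have "emb (add R x y) = fsum R1 (\<lambda>i. add R1 (gen (mul R x (r i)) (s i)) (gen (mul R y (r i)) (s i))) {..<n}"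
    unfolding emb_def'[OF closed(3)[OF xy]] using xy by (intro R1.fsum_cong) (simp add: distr gen_addl)
  also have "\<dots> = add R1 (emb x) (emb y)"
    using xy by (simp add: emb_def' R1.fsum_add)
  finally show ?thesis .
qed

lemma emb_smul: "x \<in> carr R \<Longrightarrow> emb (smul R c x) = smul R1 c (emb x)"
proof -
  assume x: "x \<in> carr R"
  have "emb (smul R c x) = fsum R1 (\<lambda>i. smul R1 c (gen (mul R x (r i)) (s i))) {..<n}"
    unfolding emb_def'[OF closed(5)[OF x]] using x by (intro R1.fsum_cong) (simp add: gen_smull[symmetric])
  also have "\<dots> = smul R1 c (emb x)"
    using x by (simp add: emb_def' R1.fsum_smul)
  finally show ?thesis .
qed

lemma emb_one[simp]: "emb (one R) = one R1"
  unfolding emb_def'[OF closed(2)] one_R1_gen by (intro R1.fsum_cong) simp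

lemma emb_zero[simp]: "emb (zero R) = zero R1"
proof -
  have "emb (zero R) = emb (smul R 0 (one R))" by simp
  also have "\<dots> = zero R1" by (simp only: emb_smul closed) simp
  finally show ?thesis .
qed

lemma E1_emb_left: "x \<in> carr R \<Longrightarrow> Y \<in> carr R1 \<Longrightarrow> E1 (mul R1 (emb x) Y) = mul R x (E1 Y)"
proof -
  assume x: "x \<in> carr R" and Y: "Y \<in> carr R1"
  from Y show ?thesis
  proof (induction rule: R1_induct)
    case zero then show ?case using x by simp
  next
    case (gen a b) then show ?case using x by (simp add: mul_emb_gen E1_gen mul_assoc)
  next
    case (add X Y) then show ?case using x by (simp add: R1.distl E1_add distl)
  next
    case (smul c X) then show ?case using x by (simp add: E1_smul)
  qed
qed

lemma E1_emb_right: "x \<in> carr R \<Longrightarrow> Y \<in> carr R1 \<Longrightarrow> E1 (mul R1 Y (emb x)) = mul R (E1 Y) x"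
proof -
  assume x: "x \<in> carr R" and Y: "Y \<in> carr R1"
  from Y show ?thesis
  proof (induction rule: R1_induct)
    case zero then show ?case using x by simp
  next
    case (gen a b) then show ?case using x by (simp add: mul_gen_emb E1_gen mul_assoc)
  next
    case (add X Y) then show ?case using x by (simp add: R1.distr E1_add distr)
  next
    case (smul c X) then show ?case using x by (simp add: E1_smul)
  qed
qed

lemma E1_emb[simp]: "x \<in> carr R \<Longrightarrow> E1 (emb x) = x"
  using E1_emb_left[of x "one R1"] by simp

end

context bc
begin

abbreviation rp where "rp \<equiv> bc_r R S lam r"
abbreviation sp where "sp \<equiv> bc_s R S s"

lemma rp_eq: "rp i = smul R1 (inverse lam) (gen (r i) (one R))"
  by (simp add: bc_r_def R1_smul)

lemma sp_eq: "sp i = gen (one R) (s i)"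
  by (simp add: bc_s_def)

lemma rp_carr[simp, intro]: "i < n \<Longrightarrow> rp i \<in> carr R1" by (simp add: rp_eq)
lemma sp_carr[simp, intro]: "i < n \<Longrightarrow> sp i \<in> carr R1" by (simp add: sp_eq)

lemma gen_zero_left[simp]: "b \<in> carr R \<Longrightarrow> gen (zero R) b = zero R1"
  unfolding R1_zero by (rule cls_eqI) (simp add: tgen_zero_left)

definition T1 where "T1 X i = mul R1 (emb (E1 (mul R1 X (rp i)))) (sp i)"
definition T2 where "T2 X i = mul R1 (rp i) (emb (E1 (mul R1 (sp i) X)))"

lemma T1_carr: "X \<in> carr R1 \<Longrightarrow> i < n \<Longrightarrow> T1 X i \<in> carr R1" unfolding T1_def by simp
lemma T2_carr: "X \<in> carr R1 \<Longrightarrow> i < n \<Longrightarrow> T2 X i \<in> carr R1" unfolding T2_def by simp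

lemma T1_add: "X \<in> carr R1 \<Longrightarrow> Y \<in> carr R1 \<Longrightarrow> i < n \<Longrightarrow> T1 (add R1 X Y) i = add R1 (T1 X i) (T1 Y i)"
  unfolding T1_def by (simp add: R1.distr E1_add emb_add)

lemma T2_add: "X \<in> carr R1 \<Longrightarrow> Y \<in> carr R1 \<Longrightarrow> i < n \<Longrightarrow> T2 (add R1 X Y) i = add R1 (T2 X i) (T2 Y i)"
  unfolding T2_def by (simp add: R1.distl E1_add emb_add)

lemma T1_smul: "X \<in> carr R1 \<Longrightarrow> i < n \<Longrightarrow> T1 (smul R1 c X) i = smul R1 c (T1 X i)"
  unfolding T1_def by (simp add: E1_smul emb_smul)

lemma T2_smul: "X \<in> carr R1 \<Longrightarrow> i < n \<Longrightarrow> T2 (smul R1 c X) i = smul R1 c (T2 X i)"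
  unfolding T2_def by (simp add: E1_smul emb_smul)

lemma T1_zero: "i < n \<Longrightarrow> T1 (zero R1) i = zero R1"
  unfolding T1_def by simp

lemma T2_zero: "i < n \<Longrightarrow> T2 (zero R1) i = zero R1"
  unfolding T2_def by simp

lemma T1_gen: "a \<in> carr R \<Longrightarrow> b \<in> carr R \<Longrightarrow> i < n \<Longrightarrow> T1 (gen a b) i = gen a (mul R (E (mul R b (r i))) (s i))"
proof -
  assume c: "a \<in> carr R" "b \<in> carr R" "i < n"
  let ?y = "mul R a (E (mul R b (r i)))"
  have y: "?y \<in> carr R" using c by simp
  have "mul R1 (gen a b) (rp i) = smul R1 (inverse lam) (gen ?y (one R))"
    unfolding rp_eq using c by (simp add: gen_mul)
  then have "E1 (mul R1 (gen a b) (rp i)) = ?y"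
    using c y lam_nz by (simp add: E1_smul E1_gen)
  then have "T1 (gen a b) i = mul R1 (emb ?y) (gen (one R) (s i))" unfolding T1_def sp_eq by simp
  also have "\<dots> = gen ?y (s i)" using c y by (simp add: mul_emb_gen)
  also have "\<dots> = gen a (mul R (E (mul R b (r i))) (s i))" using c by (simp add: gen_bal)
  finally show ?thesis .
qed

lemma T2_gen: "a \<in> carr R \<Longrightarrow> b \<in> carr R \<Longrightarrow> i < n \<Longrightarrow> T2 (gen a b) i = gen (mul R (r i) (E (mul R (s i) a))) b"
proof -
  assume c: "a \<in> carr R" "b \<in> carr R" "i < n"
  let ?y = "mul R (E (mul R (s i) a)) b"
  have y: "?y \<in> carr R" using c by simp
  have "mul R1 (sp i) (gen a b) = gen (E (mul R (s i) a)) b"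
    unfolding sp_eq using c by (simp add: gen_mul)
  then have "E1 (mul R1 (sp i) (gen a b)) = smul R lam ?y"
    using c by (simp add: E1_gen)
  then have "T2 (gen a b) i = mul R1 (rp i) (emb (smul R lam ?y))" unfolding T2_def by simp
  also have "\<dots> = smul R1 (inverse lam) (gen (r i) (smul R lam ?y))"
    unfolding rp_eq using c y by (simp add: mul_gen_emb)
  also have "\<dots> = gen (r i) ?y" using c y lam_nz by (simp add: gen_smulr)
  also have "\<dots> = gen (mul R (r i) (E (mul R (s i) a))) b" using c by (simp add: gen_bal)
  finally show ?thesis .
qed

lemma dual1': "X \<in> carr R1 \<Longrightarrow> fsum R1 (\<lambda>i. T1 X i) {..<n} = X"
proof (induction rule: R1_induct)
  case zero then show ?case by (simp add: T1_zero R1.fsum_zero_terms)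
next
  case (gen a b)
  have "fsum R1 (\<lambda>i. T1 (gen a b) i) {..<n} = fsum R1 (\<lambda>i. gen a (mul R (E (mul R b (r i))) (s i))) {..<n}"
    using gen by (intro R1.fsum_cong) (simp add: T1_gen)
  also have "\<dots> = gen a (fsum R (\<lambda>i. mul R (E (mul R b (r i))) (s i)) {..<n})"
    using gen by (intro gen_fsum_right[symmetric]) simp_all
  also have "\<dots> = gen a b" using gen by (simp add: dual1)
  finally show ?case .
next
  case (add X Y)
  have "fsum R1 (\<lambda>i. T1 (add R1 X Y) i) {..<n} = fsum R1 (\<lambda>i. add R1 (T1 X i) (T1 Y i)) {..<n}"
    using add by (intro R1.fsum_cong) (simp add: T1_add)
  also have "\<dots> = add R1 X Y" using add by (simp add: R1.fsum_add T1_carr)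
  finally show ?case .
next
  case (smul c X)
  have "fsum R1 (\<lambda>i. T1 (smul R1 c X) i) {..<n} = fsum R1 (\<lambda>i. smul R1 c (T1 X i)) {..<n}"
    using smul by (intro R1.fsum_cong) (simp add: T1_smul)
  also have "\<dots> = smul R1 c X" using smul by (simp add: R1.fsum_smul T1_carr)
  finally show ?case .
qed

lemma dual2': "X \<in> carr R1 \<Longrightarrow> fsum R1 (\<lambda>i. T2 X i) {..<n} = X"
proof (induction rule: R1_induct)
  case zero then show ?case by (simp add: T2_zero R1.fsum_zero_terms)
next
  case (gen a b)
  have "fsum R1 (\<lambda>i. T2 (gen a b) i) {..<n} = fsum R1 (\<lambda>i. gen (mul R (r i) (E (mul R (s i) a))) b) {..<n}"
    using gen by (intro R1.fsum_cong) (simp add: T2_gen)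
  also have "\<dots> = gen (fsum R (\<lambda>i. mul R (r i) (E (mul R (s i) a))) {..<n}) b"
    using gen by (intro gen_fsum_left[symmetric]) simp_all
  also have "\<dots> = gen a b" using gen by (simp add: dual2)
  finally show ?case .
next
  case (add X Y)
  have "fsum R1 (\<lambda>i. T2 (add R1 X Y) i) {..<n} = fsum R1 (\<lambda>i. add R1 (T2 X i) (T2 Y i)) {..<n}"
    using add by (intro R1.fsum_cong) (simp add: T2_add)
  also have "\<dots> = add R1 X Y" using add by (simp add: R1.fsum_add T2_carr)
  finally show ?case .
next
  case (smul c X)
  have "fsum R1 (\<lambda>i. T2 (smul R1 c X) i) {..<n} = fsum R1 (\<lambda>i. smul R1 c (T2 X i)) {..<n}"
    using smul by (intro R1.fsum_cong) (simp add: T2_smul)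
  also have "\<dots> = smul R1 c X" using smul by (simp add: R1.fsum_smul T2_carr)
  finally show ?case .
qed

lemma sum_rs': "fsum R1 (\<lambda>i. mul R1 (rp i) (sp i)) {..<n} = smul R1 (inverse lam) (one R1)"
proof -
  have "fsum R1 (\<lambda>i. mul R1 (rp i) (sp i)) {..<n} = fsum R1 (\<lambda>i. smul R1 (inverse lam) (gen (r i) (s i))) {..<n}"
    by (intro R1.fsum_cong) (simp add: rp_eq sp_eq gen_mul)
  also have "\<dots> = smul R1 (inverse lam) (one R1)"
    unfolding one_R1_gen by (intro R1.fsum_smul) simp
  finally show ?thesis .
qed

theorem hyp_R1: "hyp R1 (emb ` carr R) (emb \<circ> E1) n rp sp lam"
  unfolding hyp_def
proof (intro conjI)
  show "kalgebra R1" by (rule R1_kalgebra)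
  show "subalgebra R1 (emb ` carr R)"
    unfolding subalgebra_def
  proof (intro conjI ballI allI)
    show "emb ` carr R \<subseteq> carr R1" by auto
    show "one R1 \<in> emb ` carr R" using emb_one closed(2) by (metis imageI)
    show "zero R1 \<in> emb ` carr R" using emb_zero closed(1) by (metis imageI)
  next
    fix x y assume "x \<in> emb ` carr R" "y \<in> emb ` carr R"
    then obtain a b where ab: "a \<in> carr R" "b \<in> carr R" "x = emb a" "y = emb b" by blast
    show "add R1 x y \<in> emb ` carr R" unfolding ab(3,4) emb_add[OF ab(1,2), symmetric] using ab by simp
    show "mul R1 x y \<in> emb ` carr R" unfolding ab(3,4) emb_mul[OF ab(1,2), symmetric] using ab by simp
  next
    fix c x assume "x \<in> emb ` carr R"
    then obtain a where a: "a \<in> carr R" "x = emb a" by blast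
    show "smul R1 c x \<in> emb ` carr R" unfolding a(2) emb_smul[OF a(1), symmetric] using a by simp
  qed
  show "bimodule_map R1 (emb ` carr R) (emb \<circ> E1)"
    unfolding bimodule_map_def
  proof (intro conjI ballI)
    fix m assume "m \<in> carr R1"
    then show "(emb \<circ> E1) m \<in> emb ` carr R" by simp
  next
    fix m m' assume "m \<in> carr R1" "m' \<in> carr R1"
    then show "(emb \<circ> E1) (add R1 m m') = add R1 ((emb \<circ> E1) m) ((emb \<circ> E1) m')"
      by (simp add: E1_add emb_add)
  next
    fix x m assume "x \<in> emb ` carr R" "m \<in> carr R1"
    then obtain a where a: "a \<in> carr R" "x = emb a" by blast
    show "(emb \<circ> E1) (mul R1 x m) = mul R1 x ((emb \<circ> E1) m)"
      unfolding a(2) using a \<open>m \<in> carr R1\<close> by (simp add: E1_emb_left emb_mul)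
    show "(emb \<circ> E1) (mul R1 m x) = mul R1 ((emb \<circ> E1) m) x"
      unfolding a(2) using a \<open>m \<in> carr R1\<close> by (simp add: E1_emb_right emb_mul)
  qed
  show "(emb \<circ> E1) (one R1) = one R1" by simp
  show "\<forall>i<n. rp i \<in> carr R1 \<and> sp i \<in> carr R1" by simp
  show "\<forall>m\<in>carr R1. fsum R1 (\<lambda>i. mul R1 ((emb \<circ> E1) (mul R1 m (rp i))) (sp i)) {..<n} = m"
    using dual1' unfolding T1_def by simp
  show "\<forall>m\<in>carr R1. fsum R1 (\<lambda>i. mul R1 (rp i) ((emb \<circ> E1) (mul R1 (sp i) m))) {..<n} = m"
    using dual2' unfolding T2_def by simp
  show "lam \<noteq> 0" by (rule lam_nz)
  show "fsum R1 (\<lambda>i. mul R1 (rp i) (sp i)) {..<n} = smul R1 (inverse lam) (one R1)" by (rule sum_rs')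
qed

end

context ka
begin

lemma cent_carr: "x \<in> cent A T \<Longrightarrow> x \<in> carr A" unfolding cent_def by blast

lemma cent_comm: "x \<in> cent A T \<Longrightarrow> t \<in> T \<Longrightarrow> mul A x t = mul A t x" unfolding cent_def by blast

lemma cent_sub:
  assumes "T \<subseteq> carr A" "x \<in> cent A T" "y \<in> cent A T" shows "sub x y \<in> cent A T"
  unfolding cent_def
proof (intro CollectI conjI ballI)
  have xy: "x \<in> carr A" "y \<in> carr A" using assms cent_carr by blast+
  then show "sub x y \<in> carr A" by simp
  fix t assume t: "t \<in> T"
  then have tc: "t \<in> carr A" using assms(1) by blast
  have "mul A (sub x y) t = sub (mul A x t) (mul A y t)" using xy tc by (rule mul_sub_left)
  also have "\<dots> = sub (mul A t x) (mul A t y)" using assms(2,3) t cent_comm by metis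
  also have "\<dots> = mul A t (sub x y)" using xy tc by (rule mul_sub_right[symmetric])
  finally show "mul A (sub x y) t = mul A t (sub x y)" .
qed

lemma cent_mul:
  assumes "T \<subseteq> carr A" "x \<in> cent A T" "y \<in> cent A T" shows "mul A x y \<in> cent A T"
  unfolding cent_def
proof (intro CollectI conjI ballI)
  have xy: "x \<in> carr A" "y \<in> carr A" using assms cent_carr by blast+
  then show "mul A x y \<in> carr A" by simp
  fix t assume t: "t \<in> T"
  then have tc: "t \<in> carr A" using assms(1) by blast
  have "mul A (mul A x y) t = mul A x (mul A y t)" using xy tc by (rule mul_assoc)
  also have "\<dots> = mul A x (mul A t y)" using assms(3) t cent_comm by metis
  also have "\<dots> = mul A (mul A x t) y" using xy tc by (simp add: mul_assoc)
  also have "\<dots> = mul A (mul A t x) y" using assms(2) t cent_comm by metis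
  also have "\<dots> = mul A t (mul A x y)" using xy tc by (simp add: mul_assoc)
  finally show "mul A (mul A x y) t = mul A t (mul A x y)" .
qed

lemma cent_mono: "T' \<subseteq> T \<Longrightarrow> cent A T \<subseteq> cent A T'"
  unfolding cent_def by blast

end

context bc
begin

lemma E1_sub: "X \<in> carr R1 \<Longrightarrow> Y \<in> carr R1 \<Longrightarrow> E1 (R1.sub X Y) = sub (E1 X) (E1 Y)"
  unfolding R1.sub_def sub_def by (simp add: E1_add E1_smul)

lemma mul_gen_one_right: "Y \<in> carr R1 \<Longrightarrow> b \<in> carr R \<Longrightarrow> mul R1 Y (gen (one R) b) = gen (Psi Y) b"
proof -
  assume Y: "Y \<in> carr R1" and b: "b \<in> carr R"
  from Y show ?thesis
  proof (induction rule: R1_induct)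
    case zero then show ?case using b by simp
  next
    case (gen a b') then show ?case using b by (simp add: gen_mul Psi_gen)
  next
    case (add X Y) then show ?case using b by (simp add: R1.distr Psi_add gen_addl)
  next
    case (smul c X) then show ?case using b by (simp add: Psi_smul gen_smull)
  qed
qed

lemma mul_gen_S_one: "Y \<in> carr R1 \<Longrightarrow> x \<in> S \<Longrightarrow> mul R1 Y (gen x (one R)) = gen (mul R (Psi Y) x) (one R)"
proof -
  assume Y: "Y \<in> carr R1" and x: "x \<in> S"
  have xc: "x \<in> carr R" using x by simp
  from Y show ?thesis
  proof (induction rule: R1_induct)
    case zero then show ?case using xc by simp
  next
    case (gen a b) then show ?case using x xc by (simp add: gen_mul Psi_gen E_right mul_assoc)
  next
    case (add X Y) then show ?case using xc by (simp add: R1.distr Psi_add gen_addl distr)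
  next
    case (smul c X) then show ?case using xc by (simp add: Psi_smul gen_smull)
  qed
qed

lemma cent_R1:
  assumes cS: "cent R S \<subseteq> scalars R"
  shows "cent R1 (emb ` carr R) \<subseteq> scalars R1"
proof
  fix X assume Xc: "X \<in> cent R1 (emb ` carr R)"
  have X: "X \<in> carr R1" using Xc R1.cent_carr by blast
  have comm: "\<And>m. m \<in> carr R \<Longrightarrow> mul R1 X (emb m) = mul R1 (emb m) X"
    using Xc R1.cent_comm by blast
  let ?u = "Psi X"
  have u: "?u \<in> carr R" using X by simp
  have key: "\<And>m b. m \<in> carr R \<Longrightarrow> b \<in> carr R \<Longrightarrow> mul R1 X (gen m b) = gen (mul R m ?u) b"
  proof -
    fix m b assume mb: "m \<in> carr R" "b \<in> carr R"
    have "mul R1 X (gen m b) = mul R1 X (mul R1 (emb m) (gen (one R) b))"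
      using mb by (simp add: mul_emb_gen)
    also have "\<dots> = mul R1 (mul R1 X (emb m)) (gen (one R) b)"
      using mb X by (simp add: R1.mul_assoc)
    also have "\<dots> = mul R1 (mul R1 (emb m) X) (gen (one R) b)" using comm mb by simp
    also have "\<dots> = mul R1 (emb m) (mul R1 X (gen (one R) b))"
      using mb X by (simp add: R1.mul_assoc)
    also have "\<dots> = gen (mul R m ?u) b" using mb X u by (simp add: mul_gen_one_right mul_emb_gen)
    finally show "mul R1 X (gen m b) = gen (mul R m ?u) b" .
  qed
  have ucent: "?u \<in> cent R S"
    unfolding cent_def
  proof (intro CollectI conjI ballI)
    show "?u \<in> carr R" by (rule u)
    fix x assume x: "x \<in> S"
    have xc: "x \<in> carr R" using x by simp
    have "gen (mul R ?u x) (one R) = gen (mul R x ?u) (one R)"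
      using mul_gen_S_one[OF X x] key[OF xc closed(2)] by simp
    then have "E1 (gen (mul R ?u x) (one R)) = E1 (gen (mul R x ?u) (one R))" by simp
    then have "smul R lam (mul R ?u x) = smul R lam (mul R x ?u)" using u xc by (simp add: E1_gen)
    then have "smul R (inverse lam) (smul R lam (mul R ?u x)) = smul R (inverse lam) (smul R lam (mul R x ?u))" by simp
    then show "mul R ?u x = mul R x ?u" using u xc lam_nz by simp
  qed
  then obtain c where c: "?u = smul R c (one R)" using cS unfolding scalars_def by blast
  have "X = mul R1 X (one R1)" using X by simp
  also have "\<dots> = fsum R1 (\<lambda>i. mul R1 X (gen (r i) (s i))) {..<n}"
    unfolding one_R1_gen using X by (intro R1.fsum_mul_left[symmetric]) simp_all
  also have "\<dots> = fsum R1 (\<lambda>i. smul R1 c (gen (r i) (s i))) {..<n}"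
    by (intro R1.fsum_cong) (simp add: key c gen_smull)
  also have "\<dots> = smul R1 c (one R1)" unfolding one_R1_gen by (intro R1.fsum_smul) simp
  finally show "X \<in> scalars R1" unfolding scalars_def by blast
qed

end

lemma (in bc) main:
  fixes q qB qt :: "('k, ('k, 'a) free2 set) free2 set \<Rightarrow> ('k, ('k, 'a) free2 set) free2 set"
    and qA :: "('k, 'a) free2 set \<Rightarrow> ('k, 'a) free2 set"
  defines "M2 \<equiv> bc_alg R1 (emb ` carr R) (emb \<circ> E1) n rp sp"
    and "i2 \<equiv> bc_emb R1 (emb ` carr R) n rp sp"
    and "EM1 \<equiv> bc_E R1 lam"
    and "A \<equiv> cent R1 (emb ` S)"
    and "B \<equiv> cent (bc_alg R1 (emb ` carr R) (emb \<circ> E1) n rp sp) (bc_emb R1 (emb ` carr R) n rp sp ` emb ` carr R)"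
    and "C \<equiv> cent (bc_alg R1 (emb ` carr R) (emb \<circ> E1) n rp sp) (bc_emb R1 (emb ` carr R) n rp sp ` emb ` S)"
    and "F \<equiv> E1 \<circ> bc_E R1 lam"
  assumes cS: "cent R S = scalars R" and nz: "one R \<noteq> zero R"
    and faithF: "faithful_on M2 C R F"
    and faithA: "faithful_on R1 A R E1"
    and faithB: "faithful_on M2 B R1 EM1"
    and qd: "\<forall>c\<in>C. q c \<in> C" "\<forall>c\<in>C. \<forall>c'\<in>C. F (mul M2 (q c) c') = F (mul M2 c' c)"
    and qAd: "\<forall>a\<in>A. qA a \<in> A" "\<forall>a\<in>A. \<forall>a'\<in>A. E1 (mul R1 (qA a) a') = E1 (mul R1 a' a)"
    and qBd: "\<forall>b\<in>B. qB b \<in> B" "\<forall>b\<in>B. \<forall>b'\<in>B. EM1 (mul M2 (qB b) b') = EM1 (mul M2 b' b)"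
    and qtd: "\<forall>b\<in>B. qt b \<in> B" "\<forall>b\<in>B. \<forall>z\<in>carr M2. F (mul M2 (qt b) z) = F (mul M2 z b)"
  shows "(\<forall>b\<in>B. qB b = q b \<and> qt b = q b) \<and>
         (\<forall>a\<in>A. i2 (qA a) = q (i2 a)) \<and>
         (\<forall>c\<in>C. EM1 (q c) = qA (EM1 c))"
proof -
  interpret L2: bc R1 "emb ` carr R" "emb \<circ> E1" n rp sp lam
    by (rule bc.intro, rule hyp_R1)
  interpret M2: ka M2 unfolding M2_def by unfold_locales (rule L2.R1_kalgebra)
  have i2_carr: "\<And>X. X \<in> carr R1 \<Longrightarrow> i2 X \<in> carr M2" unfolding M2_def i2_def by (rule L2.emb_carr)
  have i2_mul: "\<And>X Y. X \<in> carr R1 \<Longrightarrow> Y \<in> carr R1 \<Longrightarrow> i2 (mul R1 X Y) = mul M2 (i2 X) (i2 Y)"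
    unfolding M2_def i2_def by (rule L2.emb_mul)
  have EM1_carr: "\<And>Z. Z \<in> carr M2 \<Longrightarrow> EM1 Z \<in> carr R1" unfolding M2_def EM1_def by (rule L2.E1_closed)
  have EM1_sub: "\<And>X Y. X \<in> carr M2 \<Longrightarrow> Y \<in> carr M2 \<Longrightarrow> EM1 (M2.sub X Y) = R1.sub (EM1 X) (EM1 Y)"
    unfolding M2_def EM1_def by (rule L2.E1_sub)
  have EM1_left: "\<And>X Z. X \<in> carr R1 \<Longrightarrow> Z \<in> carr M2 \<Longrightarrow> EM1 (mul M2 (i2 X) Z) = mul R1 X (EM1 Z)"
    unfolding M2_def EM1_def i2_def by (rule L2.E1_emb_left)
  have EM1_right: "\<And>X Z. X \<in> carr R1 \<Longrightarrow> Z \<in> carr M2 \<Longrightarrow> EM1 (mul M2 Z (i2 X)) = mul R1 (EM1 Z) X"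
    unfolding M2_def EM1_def i2_def by (rule L2.E1_emb_right)
  have F_eq: "\<And>Z. F Z = E1 (EM1 Z)" unfolding F_def EM1_def by simp
  have F_sub: "\<And>X Y. X \<in> carr M2 \<Longrightarrow> Y \<in> carr M2 \<Longrightarrow> F (M2.sub X Y) = sub (F X) (F Y)"
    unfolding F_eq by (simp add: EM1_sub E1_sub EM1_carr)
  have e1S: "emb ` S \<subseteq> carr R1" by auto
  have e1M: "emb ` carr R \<subseteq> carr R1" by auto
  have e2S: "i2 ` emb ` S \<subseteq> carr M2" using i2_carr by auto
  have e2M: "i2 ` emb ` carr R \<subseteq> carr M2" using i2_carr by auto
  note BCdefs = B_def C_def M2_def[symmetric] i2_def[symmetric]
  have BC: "B \<subseteq> C" unfolding BCdefs by (rule M2.cent_mono) auto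
  have Ac: "\<And>a. a \<in> A \<Longrightarrow> a \<in> carr R1" unfolding A_def by (rule R1.cent_carr)
  have Cc: "\<And>c. c \<in> C \<Longrightarrow> c \<in> carr M2" unfolding BCdefs by (rule M2.cent_carr)
  have Bc: "\<And>c. c \<in> B \<Longrightarrow> c \<in> carr M2" unfolding BCdefs by (rule M2.cent_carr)
  have i2A: "\<And>a. a \<in> A \<Longrightarrow> i2 a \<in> C"
  proof -
    fix a assume a: "a \<in> A"
    show "i2 a \<in> C" unfolding BCdefs cent_def
    proof (intro CollectI conjI ballI)
      show "i2 a \<in> carr M2" using a Ac i2_carr by blast
      fix t assume "t \<in> i2 ` emb ` S"
      then obtain m where m: "m \<in> S" "t = i2 (emb m)" by blast
      have em: "emb m \<in> carr R1" using m by simp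
      have "mul R1 a (emb m) = mul R1 (emb m) a" using a m unfolding A_def cent_def by blast
      then show "mul M2 (i2 a) t = mul M2 t (i2 a)" unfolding m(2)
        using i2_mul[OF Ac[OF a] em] i2_mul[OF em Ac[OF a]] by simp
    qed
  qed
  have EM1cent: "\<And>c T. c \<in> cent M2 (i2 ` emb ` T) \<Longrightarrow> T \<subseteq> carr R \<Longrightarrow> EM1 c \<in> cent R1 (emb ` T)"
  proof -
    fix c T assume c: "c \<in> cent M2 (i2 ` emb ` T)" and T: "T \<subseteq> carr R"
    have cc: "c \<in> carr M2" using c by (rule M2.cent_carr)
    show "EM1 c \<in> cent R1 (emb ` T)" unfolding cent_def
    proof (intro CollectI conjI ballI)
      show "EM1 c \<in> carr R1" using cc by (rule EM1_carr)
      fix t assume "t \<in> emb ` T"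
      then obtain m where m: "m \<in> T" "t = emb m" by blast
      have em: "emb m \<in> carr R1" using m T by auto
      have "mul M2 c (i2 (emb m)) = mul M2 (i2 (emb m)) c" using c m unfolding cent_def by blast
      then show "mul R1 (EM1 c) t = mul R1 t (EM1 c)" unfolding m(2)
        using EM1_right[OF em cc] EM1_left[OF em cc] by simp
    qed
  qed
  have EM1C: "\<And>c. c \<in> C \<Longrightarrow> EM1 c \<in> A" unfolding A_def BCdefs using EM1cent by auto
  have fA: "\<And>d. d \<in> A \<Longrightarrow> (\<And>d'. d' \<in> A \<Longrightarrow> E1 (mul R1 d d') = zero R) \<Longrightarrow> d = zero R1"
    using faithA unfolding faithful_on_def by blast
  have fF: "\<And>d. d \<in> C \<Longrightarrow> (\<And>d'. d' \<in> C \<Longrightarrow> F (mul M2 d d') = zero R) \<Longrightarrow> d = zero M2"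
    using faithF unfolding faithful_on_def by blast
  have fB: "\<And>d. d \<in> B \<Longrightarrow> (\<And>d'. d' \<in> B \<Longrightarrow> EM1 (mul M2 d d') = zero R1) \<Longrightarrow> d = zero M2"
    using faithB unfolding faithful_on_def by blast
  have CsubC: "\<And>x y. x \<in> C \<Longrightarrow> y \<in> C \<Longrightarrow> M2.sub x y \<in> C"
    unfolding BCdefs by (rule M2.cent_sub[OF e2S])
  have BsubB: "\<And>x y. x \<in> B \<Longrightarrow> y \<in> B \<Longrightarrow> M2.sub x y \<in> B"
    unfolding BCdefs by (rule M2.cent_sub[OF e2M])
  have BmulB: "\<And>x y. x \<in> B \<Longrightarrow> y \<in> B \<Longrightarrow> mul M2 x y \<in> B"
    unfolding BCdefs by (rule M2.cent_mul[OF e2M])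
  have AsubA: "\<And>x y. x \<in> A \<Longrightarrow> y \<in> A \<Longrightarrow> R1.sub x y \<in> A"
    unfolding A_def by (rule R1.cent_sub[OF e1S])
  have cR1: "cent R1 (emb ` carr R) \<subseteq> scalars R1" using cent_R1 cS by simp

  have c3: "\<forall>c\<in>C. EM1 (q c) = qA (EM1 c)"
  proof
    fix c assume c: "c \<in> C"
    have qc: "q c \<in> C" using qd(1) c by blast
    have x1: "EM1 (q c) \<in> A" using EM1C qc by blast
    have x2: "qA (EM1 c) \<in> A" using qAd(1) EM1C c by blast
    have "R1.sub (EM1 (q c)) (qA (EM1 c)) = zero R1"
    proof (rule fA)
      show "R1.sub (EM1 (q c)) (qA (EM1 c)) \<in> A" using x1 x2 by (rule AsubA)
      fix a' assume a': "a' \<in> A"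
      have "E1 (mul R1 (EM1 (q c)) a') = E1 (EM1 (mul M2 (q c) (i2 a')))"
        using EM1_right[OF Ac[OF a'] Cc[OF qc]] by simp
      also have "\<dots> = F (mul M2 (i2 a') c)" using qd(2) qc i2A[OF a'] c F_eq by metis
      also have "\<dots> = E1 (mul R1 a' (EM1 c))" using EM1_left[OF Ac[OF a'] Cc[OF c]] F_eq by simp
      also have "\<dots> = E1 (mul R1 (qA (EM1 c)) a')" using qAd(2) EM1C[OF c] a' by metis
      finally have eq: "E1 (mul R1 (EM1 (q c)) a') = E1 (mul R1 (qA (EM1 c)) a')" .
      have "E1 (mul R1 (R1.sub (EM1 (q c)) (qA (EM1 c))) a') =
            sub (E1 (mul R1 (EM1 (q c)) a')) (E1 (mul R1 (qA (EM1 c)) a'))"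
        using Ac[OF x1] Ac[OF x2] Ac[OF a'] by (simp add: R1.mul_sub_left E1_sub)
      also have "\<dots> = zero R" unfolding eq using Ac[OF x2] Ac[OF a'] by simp
      finally show "E1 (mul R1 (R1.sub (EM1 (q c)) (qA (EM1 c))) a') = zero R" .
    qed
    then show "EM1 (q c) = qA (EM1 c)" using Ac[OF x1] Ac[OF x2] by (rule R1.sub_eq_zero[rotated 2])
  qed

  have c2: "\<forall>a\<in>A. i2 (qA a) = q (i2 a)"
  proof
    fix a assume a: "a \<in> A"
    have x1: "i2 (qA a) \<in> C" using i2A qAd(1) a by blast
    have x2: "q (i2 a) \<in> C" using qd(1) i2A[OF a] by blast
    have "M2.sub (i2 (qA a)) (q (i2 a)) = zero M2"
    proof (rule fF)
      show "M2.sub (i2 (qA a)) (q (i2 a)) \<in> C" using x1 x2 by (rule CsubC)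
      fix c' assume c': "c' \<in> C"
      have qa: "qA a \<in> A" using qAd(1) a by blast
      have "F (mul M2 (i2 (qA a)) c') = E1 (mul R1 (qA a) (EM1 c'))"
        using EM1_left[OF Ac[OF qa] Cc[OF c']] F_eq by simp
      also have "\<dots> = E1 (mul R1 (EM1 c') a)" using qAd(2) a EM1C[OF c'] by metis
      also have "\<dots> = F (mul M2 c' (i2 a))" using EM1_right[OF Ac[OF a] Cc[OF c']] F_eq by simp
      also have "\<dots> = F (mul M2 (q (i2 a)) c')" using qd(2) i2A[OF a] c' by metis
      finally have eq: "F (mul M2 (i2 (qA a)) c') = F (mul M2 (q (i2 a)) c')" .
      have "F (mul M2 (M2.sub (i2 (qA a)) (q (i2 a))) c') =
            sub (F (mul M2 (i2 (qA a)) c')) (F (mul M2 (q (i2 a)) c'))"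
        using Cc[OF x1] Cc[OF x2] Cc[OF c'] by (simp add: M2.mul_sub_left F_sub)
      also have "\<dots> = zero R" unfolding eq using Cc[OF x2] Cc[OF c'] F_eq EM1_carr by simp
      finally show "F (mul M2 (M2.sub (i2 (qA a)) (q (i2 a))) c') = zero R" .
    qed
    then show "i2 (qA a) = q (i2 a)" using Cc[OF x1] Cc[OF x2] by (rule M2.sub_eq_zero[rotated 2])
  qed

  have c1a: "\<And>b. b \<in> B \<Longrightarrow> qt b = q b"
  proof -
    fix b assume b: "b \<in> B"
    have bC: "b \<in> C" using b BC by blast
    have x1: "qt b \<in> C" using qtd(1) b BC by blast
    have x2: "q b \<in> C" using qd(1) bC by blast
    have "M2.sub (qt b) (q b) = zero M2"
    proof (rule fF)
      show "M2.sub (qt b) (q b) \<in> C" using x1 x2 by (rule CsubC)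
      fix c' assume c': "c' \<in> C"
      have eq: "F (mul M2 (qt b) c') = F (mul M2 (q b) c')"
        using qtd(2) b Cc[OF c'] qd(2) bC c' by metis
      have "F (mul M2 (M2.sub (qt b) (q b)) c') = sub (F (mul M2 (qt b) c')) (F (mul M2 (q b) c'))"
        using Cc[OF x1] Cc[OF x2] Cc[OF c'] by (simp add: M2.mul_sub_left F_sub)
      also have "\<dots> = zero R" unfolding eq using Cc[OF x2] Cc[OF c'] F_eq EM1_carr by simp
      finally show "F (mul M2 (M2.sub (qt b) (q b)) c') = zero R" .
    qed
    then show "qt b = q b" using Cc[OF x1] Cc[OF x2] by (rule M2.sub_eq_zero[rotated 2])
  qed
  have c1b: "\<And>b. b \<in> B \<Longrightarrow> qB b = qt b"
  proof -
    fix b assume b: "b \<in> B"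
    have x1: "qB b \<in> B" using qBd(1) b by blast
    have x2: "qt b \<in> B" using qtd(1) b by blast
    have "M2.sub (qB b) (qt b) = zero M2"
    proof (rule fB)
      show "M2.sub (qB b) (qt b) \<in> B" using x1 x2 by (rule BsubB)
      fix b' assume b': "b' \<in> B"
      have u1: "mul M2 (qt b) b' \<in> B" using x2 b' by (rule BmulB)
      have u2: "mul M2 b' b \<in> B" using b' b by (rule BmulB)
      have s1: "EM1 (mul M2 (qt b) b') \<in> scalars R1" using EM1cent[of _ "carr R"] u1 cR1 unfolding BCdefs by blast
      have s2: "EM1 (mul M2 b' b) \<in> scalars R1" using EM1cent[of _ "carr R"] u2 cR1 unfolding BCdefs by blast
      obtain k1 where k1: "EM1 (mul M2 (qt b) b') = smul R1 k1 (one R1)" using s1 unfolding scalars_def by blast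
      obtain k2 where k2: "EM1 (mul M2 b' b) = smul R1 k2 (one R1)" using s2 unfolding scalars_def by blast
      have "F (mul M2 (qt b) b') = F (mul M2 b' b)" using qtd(2) b Bc[OF b'] by blast
      then have "E1 (smul R1 k1 (one R1)) = E1 (smul R1 k2 (one R1))" using k1 k2 F_eq by simp
      then have "smul R k1 (one R) = smul R k2 (one R)" by (simp add: E1_smul)
      then have "k1 = k2" using nz by (intro smul_eq_one_iff) simp_all
      then have eq: "EM1 (mul M2 (qt b) b') = EM1 (mul M2 b' b)" using k1 k2 by simp
      have "EM1 (mul M2 (M2.sub (qB b) (qt b)) b') = R1.sub (EM1 (mul M2 (qB b) b')) (EM1 (mul M2 (qt b) b'))"
        using Bc[OF x1] Bc[OF x2] Bc[OF b'] by (simp add: M2.mul_sub_left EM1_sub)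
      also have "\<dots> = R1.sub (EM1 (mul M2 b' b)) (EM1 (mul M2 b' b))" using qBd(2) b b' eq by simp
      also have "\<dots> = zero R1" using Bc[OF b'] Bc[OF b] EM1_carr by simp
      finally show "EM1 (mul M2 (M2.sub (qB b) (qt b)) b') = zero R1" .
    qed
    then show "qB b = qt b" using Bc[OF x1] Bc[OF x2] by (rule M2.sub_eq_zero[rotated 2])
  qed
  show ?thesis using c1a c1b c2 c3 by simp
qed

theorem proposition3p9:
  fixes M :: "('k::field, 'a) kalg" and N :: "'a set" and E :: "'a \<Rightarrow> 'a"
    and n :: nat and x y :: "nat \<Rightarrow> 'a" and lam :: 'k
    and q :: "('k, ('k, 'a) free2 set) free2 set \<Rightarrow> ('k, ('k, 'a) free2 set) free2 set"
    and qB qt :: "('k, ('k, 'a) free2 set) free2 set \<Rightarrow> ('k, ('k, 'a) free2 set) free2 set"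
    and qA :: "('k, 'a) free2 set \<Rightarrow> ('k, 'a) free2 set"
  defines "M1 \<equiv> M1_of M N E n x y"
    and "i1 \<equiv> i1_of M N n x y"
    and "EM \<equiv> EM_of M lam"
    and "M2 \<equiv> M2_of M N E n x y lam"
    and "i2 \<equiv> i2_of M N E n x y lam"
    and "EM1 \<equiv> EM1_of M N E n x y lam"
    and "A \<equiv> cent (M1_of M N E n x y) (i1_of M N n x y ` N)"
    and "B \<equiv> cent (M2_of M N E n x y lam) (i2_of M N E n x y lam ` i1_of M N n x y ` carr M)"
    and "C \<equiv> cent (M2_of M N E n x y lam) (i2_of M N E n x y lam ` i1_of M N n x y ` N)"
    and "F \<equiv> EM_of M lam \<circ> EM1_of M N E n x y lam"
  assumes hyp: "ss_irreducible M N E n x y lam"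
    and depth2_M1: "free_right_basis_in M1 M i1 A"
    and depth2_M2: "free_right_basis_in M2 M1 i2 B"
    and faithF: "faithful_on M2 C M F"
    and faithA: "faithful_on M1 A M EM"
    and faithB: "faithful_on M2 B M1 EM1"
    and q_def: "\<forall>c\<in>C. q c \<in> C" "\<forall>c\<in>C. \<forall>c'\<in>C. F (mul M2 (q c) c') = F (mul M2 c' c)"
    and qA_def: "\<forall>a\<in>A. qA a \<in> A" "\<forall>a\<in>A. \<forall>a'\<in>A. EM (mul M1 (qA a) a') = EM (mul M1 a' a)"
    and qB_def: "\<forall>b\<in>B. qB b \<in> B" "\<forall>b\<in>B. \<forall>b'\<in>B. EM1 (mul M2 (qB b) b') = EM1 (mul M2 b' b)"
    and qt_def: "\<forall>b\<in>B. qt b \<in> B" "\<forall>b\<in>B. \<forall>z\<in>carr M2. F (mul M2 (qt b) z) = F (mul M2 z b)"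
  shows "(\<forall>b\<in>B. qB b = q b \<and> qt b = q b) \<and>
         (\<forall>a\<in>A. i2 (qA a) = q (i2 a)) \<and>
         (\<forall>c\<in>C. EM1 (q c) = qA (EM1 c))"
proof -
  have H: "hyp M N E n x y lam" using hyp unfolding ss_irreducible_def hyp_def by blast
  have cS: "cent M N = scalars M" using hyp unfolding ss_irreducible_def by blast
  have nz: "one M \<noteq> zero M" using hyp unfolding ss_irreducible_def by blast
  interpret L1: bc M N E n x y lam by (rule bc.intro) (rule H)
  note defs = M1_def i1_def EM_def M2_def i2_def EM1_def A_def B_def C_def F_def
    M1_of_def i1_of_def EM_of_def M2_of_def i2_of_def EM1_of_def
  show ?thesis unfolding defs
    by (rule L1.main[OF cS nz faithF[unfolded defs] faithA[unfolded defs] faithB[unfolded defs]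
          q_def(1)[unfolded defs] q_def(2)[unfolded defs] qA_def(1)[unfolded defs] qA_def(2)[unfolded defs]
          qB_def(1)[unfolded defs] qB_def(2)[unfolded defs] qt_def(1)[unfolded defs] qt_def(2)[unfolded defs]])
qed

end
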